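(* Let $\mathbf{A}=(A_{i,j})_{p\times p}$ be a deterministic symmetric $\{0,1\}$-valued matrix with zero diagonal, and let $\delta=\frac{2}{p(p-1)}\sum_{i<j}A_{i,j}$, $N=p(p-1)/2$. Let $\mathbf{Y},\mathbf{Y}_*,\mathbf{Y}_{**}$ be independent and identically distributed symmetric random matrices with zero diagonal, each generated as $Y_{i,j}=A_{i,j}I(\varepsilon_{i,j}=0)+I(\varepsilon_{i,j}=1)$ for $i\neq j$, where $\varepsilon_{i,j}=\varepsilon_{j,i}$, $\mathbb{P}(\varepsilon_{i,j}=1)=\alpha$, $\mathbb{P}(\varepsilon_{i,j}=0)=1-\alpha-\beta$, $\mathbb{P}(\varepsilon_{i,j}=-1)=\beta$ for all $i<j$, and $\{\varepsilon_{i,j}\}_{i<j}$ are independent. Define \[ \hat u_1=\frac{2}{p(p-1)}\sum_{i<j}Y_{i,j},\quad \hat u_2=\frac{1}{p(p-1)}\sum_{i<j}|Y_{i,j,*}-Y_{i,j}|,\quad \hat u_3=\frac{2}{3p(p-1)}\sum_{i<j}I(Y_{i,j,**}-2Y_{i,j,*}+Y_{i,j}=1\ \text{or}\ -2), \] and $u_1=(1-\delta)\alpha+\delta(1-\beta)$, $u_2=(1-\delta)\alpha(1-\alpha)+\delta\beta(1-\beta)$, $u_3=(1-\delta)\alpha(1-\alpha)^2+\delta\beta^2(1-\beta)$. Consider $p\to\infty$ (with $\mathbf{A}$, and hence $\delta$, depending on $p$). If $N_1=p(p-1)\delta\to\infty$ and $N_2=p(p-1)(1-\delta)\to\infty$,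 then \[ \sqrt{N}(\hat u_1-u_1,\hat u_2-u_2,\hat u_3-u_3)^{\mathrm{T}}\to_d\mathcal{N}(\mathbf{0},\boldsymbol{\Sigma}), \] where $\boldsymbol{\Sigma}=(\sigma_{ij})_{3\times3}$ is symmetric with, writing $\kappa_1=\alpha(1-\alpha)$, $\kappa_2=\beta(1-\beta)$: $\sigma_{11}=\delta\kappa_2+(1-\delta)\kappa_1$, $\sigma_{22}=\delta\kappa_2(1/2-\kappa_2)+(1-\delta)\kappa_1(1/2-\kappa_1)$, $\sigma_{33}=\delta\beta\kappa_2(1/3-\beta\kappa_2)+(1-\delta)\kappa_1(1-\alpha)\{1/3-\kappa_1(1-\alpha)\}$, $\sigma_{12}=\delta\kappa_2(\beta-1/2)+(1-\delta)\kappa_1(1/2-\alpha)$, $\sigma_{13}=\delta\kappa_2(\beta^2/3-2\kappa_2/3)+(1-\delta)\kappa_1\{(1-\alpha)^2/3-2\kappa_1/3\}$, $\sigma_{23}=\delta\beta\kappa_2(1/3-\kappa_2)+(1-\delta)(1-\alpha)\kappa_1(1/3-\kappa_1)$.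
   Context: Here $\alpha,\beta\ge0$ with $\alpha+\beta\le1$ are the error rates: $\mathbb{P}(Y_{i,j}=1\mid A_{i,j}=0)=\alpha$, $\mathbb{P}(Y_{i,j}=0\mid A_{i,j}=1)=\beta$. *)

theory Defs
  imports "HOL-Analysis.Analysis" "HOL-Probability.Probability"
begin

definition eps_pmf :: "real \<Rightarrow> real \<Rightarrow> int pmf" where
  "eps_pmf \<alpha> \<beta> = embed_pmf (\<lambda>k. if k = 1 then \<alpha> else if k = 0 then 1 - \<alpha> - \<beta>
                                    else if k = -1 then \<beta> else 0)"

text \<open>Errors (eps, eps_*, eps_**) for one pair, for the three iid copies Y, Y_*, Y_**.\<close>
definition eps3_pmf :: "real \<Rightarrow> real \<Rightarrow> (int \<times> int \<times> int) pmf" where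
  "eps3_pmf \<alpha> \<beta> = pair_pmf (eps_pmf \<alpha> \<beta>) (pair_pmf (eps_pmf \<alpha> \<beta>) (eps_pmf \<alpha> \<beta>))"

definition pairs :: "nat \<Rightarrow> (nat \<times> nat) set" where
  "pairs p = {(i, j). i < j \<and> j < p}"

text \<open>Joint law of all errors: independent across pairs i<j (eps_{j,i}=eps_{i,j}).\<close>
definition err_pmf :: "real \<Rightarrow> real \<Rightarrow> nat \<Rightarrow> (nat \<times> nat \<Rightarrow> int \<times> int \<times> int) pmf" where
  "err_pmf \<alpha> \<beta> p = Pi_pmf (pairs p) (0, 0, 0) (\<lambda>_. eps3_pmf \<alpha> \<beta>)"

definition Yval :: "real \<Rightarrow> int \<Rightarrow> real" where
  "Yval a e = a * (if e = 0 then 1 else 0) + (if e = 1 then 1 else 0)"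

definition dens :: "nat \<Rightarrow> (nat \<Rightarrow> nat \<Rightarrow> real) \<Rightarrow> real" where
  "dens p A = 2 / (real p * (real p - 1)) * (\<Sum>(i,j)\<in>pairs p. A i j)"

definition u1hat :: "nat \<Rightarrow> (nat \<Rightarrow> nat \<Rightarrow> real) \<Rightarrow> (nat \<times> nat \<Rightarrow> int \<times> int \<times> int) \<Rightarrow> real" where
  "u1hat p A \<omega> = 2 / (real p * (real p - 1)) *
     (\<Sum>(i,j)\<in>pairs p. Yval (A i j) (fst (\<omega> (i,j))))"

definition u2hat :: "nat \<Rightarrow> (nat \<Rightarrow> nat \<Rightarrow> real) \<Rightarrow> (nat \<times> nat \<Rightarrow> int \<times> int \<times> int) \<Rightarrow> real" where
  "u2hat p A \<omega> = 1 / (real p * (real p - 1)) *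
     (\<Sum>(i,j)\<in>pairs p. \<bar>Yval (A i j) (fst (snd (\<omega> (i,j)))) - Yval (A i j) (fst (\<omega> (i,j)))\<bar>)"

definition u3hat :: "nat \<Rightarrow> (nat \<Rightarrow> nat \<Rightarrow> real) \<Rightarrow> (nat \<times> nat \<Rightarrow> int \<times> int \<times> int) \<Rightarrow> real" where
  "u3hat p A \<omega> = 2 / (3 * real p * (real p - 1)) *
     (\<Sum>(i,j)\<in>pairs p.
        (let d = Yval (A i j) (snd (snd (\<omega> (i,j)))) - 2 * Yval (A i j) (fst (snd (\<omega> (i,j))))
                 + Yval (A i j) (fst (\<omega> (i,j)))
         in if d = 1 \<or> d = -2 then 1 else 0))"

definition u1 :: "real \<Rightarrow> real \<Rightarrow> real \<Rightarrow> real" where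
  "u1 \<alpha> \<beta> \<delta> = (1 - \<delta>) * \<alpha> + \<delta> * (1 - \<beta>)"
definition u2 :: "real \<Rightarrow> real \<Rightarrow> real \<Rightarrow> real" where
  "u2 \<alpha> \<beta> \<delta> = (1 - \<delta>) * \<alpha> * (1 - \<alpha>) + \<delta> * \<beta> * (1 - \<beta>)"
definition u3 :: "real \<Rightarrow> real \<Rightarrow> real \<Rightarrow> real" where
  "u3 \<alpha> \<beta> \<delta> = (1 - \<delta>) * \<alpha> * (1 - \<alpha>)^2 + \<delta> * \<beta>^2 * (1 - \<beta>)"

definition Sigma :: "real \<Rightarrow> real \<Rightarrow> real \<Rightarrow> real^3^3" where
  "Sigma \<alpha> \<beta> \<delta> = (let k1 = \<alpha> * (1 - \<alpha>); k2 = \<beta> * (1 - \<beta>);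
     s11 = \<delta> * k2 + (1 - \<delta>) * k1;
     s22 = \<delta> * k2 * (1/2 - k2) + (1 - \<delta>) * k1 * (1/2 - k1);
     s33 = \<delta> * \<beta> * k2 * (1/3 - \<beta> * k2) + (1 - \<delta>) * k1 * (1 - \<alpha>) * (1/3 - k1 * (1 - \<alpha>));
     s12 = \<delta> * k2 * (\<beta> - 1/2) + (1 - \<delta>) * k1 * (1/2 - \<alpha>);
     s13 = \<delta> * k2 * (\<beta>^2/3 - 2 * k2/3) + (1 - \<delta>) * k1 * ((1 - \<alpha>)^2/3 - 2 * k1/3);
     s23 = \<delta> * \<beta> * k2 * (1/3 - k2) + (1 - \<delta>) * (1 - \<alpha>) * k1 * (1/3 - k1)
   in vector [vector [s11, s12, s13], vector [s12, s22, s23], vector [s13, s23, s33]])"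

text \<open>mu is the multivariate normal law N(0, S) on R^3 (possibly degenerate),
  defined via its characteristic function.\<close>
definition is_mvnormal0 :: "real^3^3 \<Rightarrow> (real^3) measure \<Rightarrow> bool" where
  "is_mvnormal0 S \<mu> \<longleftrightarrow> prob_space \<mu> \<and> sets \<mu> = sets borel \<and>
     (\<forall>t. (CLINT x|\<mu>. cis (t \<bullet> x)) = complex_of_real (exp (- (t \<bullet> (S *v t)) / 2)))"

end

theory Submission
  imports Defs
begin

type_synonym v3 = "real^3"

definition charf :: "v3 measure \<Rightarrow> v3 \<Rightarrow> complex" where
  "charf M t = (CLINT x|M. cis (t \<bullet> x))"

inductive trigp :: "(v3 \<Rightarrow> real) \<Rightarrow> bool" where
  trm: "trigp (\<lambda>x. Re (c * cis (t \<bullet> x)))"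
| add: "trigp f \<Longrightarrow> trigp g \<Longrightarrow> trigp (\<lambda>x. f x + g x)"

lemma trigp_const: "trigp (\<lambda>x. c)"
  using trigp.trm[of "complex_of_real c" 0] by simp

lemma Re_mult_Re: "Re a * Re b = Re (a * b / 2) + Re (a * cnj b / 2)"
  by (cases a; cases b) (simp add: field_simps)

lemma trigp_trm_mult: "trigp (\<lambda>x. Re (c * cis (t \<bullet> x)) * Re (d * cis (s \<bullet> x)))"
proof -
  have "Re (c * cis (t \<bullet> x)) * Re (d * cis (s \<bullet> x)) =
     Re ((c * d / 2) * cis ((t + s) \<bullet> x)) + Re ((c * cnj d / 2) * cis ((t - s) \<bullet> x))" for x
  proof -
    have e1: "c * cis (t \<bullet> x) * (d * cis (s \<bullet> x)) / 2 = (c * d / 2) * cis ((t + s) \<bullet> x)"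
      by (simp add: inner_add_left cis_mult[symmetric] algebra_simps)
    have e2: "c * cis (t \<bullet> x) * cnj (d * cis (s \<bullet> x)) / 2 = (c * cnj d / 2) * cis ((t - s) \<bullet> x)"
    proof -
      have "cis (t \<bullet> x) * cis (- (s \<bullet> x)) = cis ((t - s) \<bullet> x)"
        by (simp add: cis_mult inner_diff_left)
      then show ?thesis by (simp add: cis_cnj algebra_simps)
    qed
    show ?thesis unfolding Re_mult_Re e1 e2 ..
  qed
  then have "(\<lambda>x. Re (c * cis (t \<bullet> x)) * Re (d * cis (s \<bullet> x))) =
     (\<lambda>x. Re ((c * d / 2) * cis ((t + s) \<bullet> x)) + Re ((c * cnj d / 2) * cis ((t - s) \<bullet> x)))"
    by (rule ext)
  then show ?thesis
    by (simp only: trigp.add[OF trigp.trm trigp.trm])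
qed

lemma trigp_mult_trm: "trigp g \<Longrightarrow> trigp (\<lambda>x. Re (c * cis (t \<bullet> x)) * g x)"
proof (induction rule: trigp.induct)
  case (trm c t)
  then show ?case using trigp_trm_mult by blast
next
  case (add f g)
  then show ?case using trigp.add[OF add.IH] by (simp add: algebra_simps)
qed

lemma trigp_mult: "trigp f \<Longrightarrow> trigp g \<Longrightarrow> trigp (\<lambda>x. f x * g x)"
proof (induction rule: trigp.induct)
  case (trm c t)
  then show ?case using trigp_mult_trm by blast
next
  case (add f1 f2)
  then show ?case using trigp.add[OF add.IH] by (simp add: algebra_simps)
qed

lemma trigp_sin: "trigp (\<lambda>x. sin (t \<bullet> x))"
proof -
  have "sin (t \<bullet> x) = Re ((- \<i>) * cis (t \<bullet> x))" for x by simp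
  then show ?thesis using trigp.trm[of "- \<i>" t] by simp
qed

lemma trigp_sum: "finite I \<Longrightarrow> (\<And>i. i \<in> I \<Longrightarrow> trigp (f i)) \<Longrightarrow> trigp (\<lambda>x. \<Sum>i\<in>I. f i x)"
proof (induction I rule: finite_induct)
  case empty
  then show ?case using trigp_const[of 0] by simp
next
  case (insert a F)
  then show ?case using trigp.add[of "f a" "\<lambda>x. \<Sum>i\<in>F. f i x"] by simp
qed

lemma trigp_poly:
  assumes "real_polynomial_function P"
  shows "trigp (\<lambda>x. P (\<chi> i. sin (x $ i / R)))"
  using assms
proof (induction rule: real_polynomial_function.induct)
  case (linear f)
  then have lin: "linear f" using bounded_linear.linear by blast
  define cf where "cf i = f (axis i 1)" for i
  have fy: "f y = (\<Sum>i\<in>UNIV. y $ i * cf i)" for y :: v3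
  proof -
    have "f y = f (\<Sum>i\<in>UNIV. y $ i *s axis i 1)" by (simp add: basis_expansion)
    also have "\<dots> = (\<Sum>i\<in>UNIV. y $ i * cf i)"
      by (simp add: linear_sum[OF lin] scalar_mult_eq_scaleR linear_scale[OF lin] cf_def)
    finally show ?thesis .
  qed
  have eq: "f (\<chi> i. sin (x $ i / R)) = (\<Sum>i\<in>UNIV. sin (axis i (1/R) \<bullet> x) * cf i)" for x
    unfolding fy by (simp add: inner_axis')
  show ?case unfolding eq
    by (intro trigp_sum trigp_mult trigp_sin trigp_const) auto
next
  case (const c)
  then show ?case by (rule trigp_const)
next
  case (add f g)
  show ?case using add.IH by (rule trigp.add)
next
  case (mult f g)
  show ?case using mult.IH by (rule trigp_mult)
qed

lemma meas_borel:
  fixes g :: "v3 \<Rightarrow> 'b::topological_space"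
  assumes "sets M = sets borel" "continuous_on UNIV g"
  shows "g \<in> borel_measurable M"
  unfolding measurable_cong_sets[OF assms(1) refl] by (rule borel_measurable_continuous_onI[OF assms(2)])

lemma integrable_bc:
  fixes g :: "v3 \<Rightarrow> 'b::{banach,second_countable_topology}"
  assumes "prob_space M" "sets M = sets borel" "continuous_on UNIV g" "\<And>x. norm (g x) \<le> B"
  shows "integrable M g"
proof -
  interpret prob_space M by fact
  show ?thesis
    by (rule integrable_const_bound[where B=B]) (auto simp: assms meas_borel)
qed

lemma trigp_bc: "trigp g \<Longrightarrow> continuous_on UNIV g \<and> (\<exists>B. \<forall>x. \<bar>g x\<bar> \<le> B)"
proof (induction rule: trigp.induct)
  case (trm c t)
  have "\<bar>Re (c * cis (t \<bullet> x))\<bar> \<le> cmod c" for x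
    using abs_Re_le_cmod[of "c * cis (t \<bullet> x)"] by (simp add: norm_mult)
  then show ?case by (auto intro!: continuous_intros)
next
  case (add f g)
  then obtain B1 B2 where "\<forall>x. \<bar>f x\<bar> \<le> B1" "\<forall>x. \<bar>g x\<bar> \<le> B2" by blast
  then have "\<forall>x. \<bar>f x + g x\<bar> \<le> B1 + B2" by (metis abs_triangle_ineq add_mono order_trans)
  with add show ?case by (auto intro!: continuous_intros)
qed

lemma integrable_trigp:
  assumes "prob_space M" "sets M = sets borel" "trigp g"
  shows "integrable M g"
  using trigp_bc[OF assms(3)] integrable_bc[OF assms(1,2)] by (metis real_norm_def)

lemma integral_trm:
  assumes "prob_space M" "sets M = sets borel"
  shows "(\<integral>x. Re (c * cis (t \<bullet> x)) \<partial>M) = Re (c * charf M t)"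
proof -
  have int: "integrable M (\<lambda>x. cis (t \<bullet> x))"
    by (rule integrable_bc[OF assms, where B=1]) (auto intro!: continuous_intros)
  then have int2: "integrable M (\<lambda>x. c * cis (t \<bullet> x))" by simp
  have "(\<integral>x. Re (c * cis (t \<bullet> x)) \<partial>M) = Re (\<integral>x. c * cis (t \<bullet> x) \<partial>M)"
    by (rule integral_bounded_linear[OF bounded_linear_Re int2])
  also have "\<dots> = Re (c * charf M t)" unfolding charf_def by simp
  finally show ?thesis .
qed

lemma trigp_lim:
  fixes M M' :: "nat \<Rightarrow> v3 measure"
  assumes "trigp g"
    and P: "\<And>n. prob_space (M n)" "\<And>n. sets (M n) = sets borel"
    and P': "\<And>n. prob_space (M' n)" "\<And>n. sets (M' n) = sets borel"
    and ch: "\<And>t. (\<lambda>n. charf (M n) t - charf (M' n) t) \<longlonglongrightarrow> 0"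
  shows "(\<lambda>n. (\<integral>x. g x \<partial>M n) - (\<integral>x. g x \<partial>M' n)) \<longlonglongrightarrow> 0"
  using assms(1)
proof (induction rule: trigp.induct)
  case (trm c t)
  have "(\<lambda>n. Re (c * (charf (M n) t - charf (M' n) t))) \<longlonglongrightarrow> Re (c * 0)"
    by (intro tendsto_intros ch)
  moreover have "(\<integral>x. Re (c * cis (t \<bullet> x)) \<partial>M n) - (\<integral>x. Re (c * cis (t \<bullet> x)) \<partial>M' n)
     = Re (c * (charf (M n) t - charf (M' n) t))" for n
    by (subst integral_trm[OF P(1,2)], subst integral_trm[OF P'(1,2)]) (simp add: right_diff_distrib)
  ultimately show ?case by simp
next
  case (add f g)
  have "(\<lambda>n. ((\<integral>x. f x \<partial>M n) - (\<integral>x. f x \<partial>M' n)) + ((\<integral>x. g x \<partial>M n) - (\<integral>x. g x \<partial>M' n))) \<longlonglongrightarrow> 0 + 0"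
    by (intro tendsto_add add.IH)
  then show ?case
    using add.hyps by (simp add: integral_add integrable_trigp P P' algebra_simps)
qed

lemma trig_approx:
  fixes f :: "v3 \<Rightarrow> real"
  assumes f: "continuous_on UNIV f" and fB: "\<And>x. \<bar>f x\<bar> \<le> B" and R: "R > 0" and e: "e > 0"
  obtains g where "trigp g" "\<And>x. \<bar>g x\<bar> \<le> B + e"
    "\<And>x. (\<forall>i. \<bar>x $ i\<bar> \<le> R) \<Longrightarrow> \<bar>f x - g x\<bar> \<le> e"
proof -
  define \<Psi> :: "v3 \<Rightarrow> v3" where "\<Psi> y = (\<chi> i. R * arcsin (y $ i))" for y
  define \<Phi> :: "v3 \<Rightarrow> v3" where "\<Phi> x = (\<chi> i. sin (x $ i / R))" for x
  define S :: "v3 set" where "S = cbox (-1) 1"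
  have S: "y \<in> S \<longleftrightarrow> (\<forall>i. -1 \<le> y $ i \<and> y $ i \<le> 1)" for y
    by (simp add: S_def mem_box_cart)
  have "continuous_on S \<Psi>"
    unfolding \<Psi>_def
    by (intro continuous_on_vec_lambda continuous_intros continuous_on_arcsin) (auto simp: S)
  then have "continuous_on S (\<lambda>y. f (\<Psi> y))"
    by (rule continuous_on_compose2[OF f]) auto
  then obtain P where P: "real_polynomial_function P" "\<And>y. y \<in> S \<Longrightarrow> \<bar>f (\<Psi> y) - P y\<bar> < e"
    using Stone_Weierstrass_real_polynomial_function[of S "\<lambda>y. f (\<Psi> y)" e] e
    unfolding S_def by (metis compact_cbox)
  have \<Phi>S: "\<Phi> x \<in> S" for x by (simp add: S \<Phi>_def)
  show ?thesis
  proof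
    show "trigp (\<lambda>x. P (\<Phi> x))" unfolding \<Phi>_def by (rule trigp_poly[OF P(1)])
    show "\<bar>P (\<Phi> x)\<bar> \<le> B + e" for x
      using P(2)[OF \<Phi>S[of x]] fB[of "\<Psi> (\<Phi> x)"] by linarith
    show "\<bar>f x - P (\<Phi> x)\<bar> \<le> e" if "\<forall>i. \<bar>x $ i\<bar> \<le> R" for x
    proof -
      have "\<Psi> (\<Phi> x) = x"
      proof (subst vec_eq_iff, intro allI)
        fix i
        have "\<bar>x $ i / R\<bar> \<le> 1" using that R by (simp add: divide_le_eq_1)
        moreover have "1 < pi / 2" using pi_gt3 by linarith
        ultimately have "- (pi/2) \<le> x $ i / R" "x $ i / R \<le> pi / 2"
          by (simp_all only: abs_le_iff) linarith+
        then have "arcsin (sin (x $ i / R)) = x $ i / R"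
          by (intro arcsin_sin)
        then show "\<Psi> (\<Phi> x) $ i = x $ i" using R by (simp add: \<Psi>_def \<Phi>_def)
      qed
      then show ?thesis using P(2)[OF \<Phi>S[of x]] by simp
    qed
  qed
qed

definition outs :: "real \<Rightarrow> v3 set" where
  "outs R = {x. \<exists>i. R < \<bar>x $ i\<bar>}"

lemma open_outs: "open (outs R)"
proof -
  have "outs R = (\<Union>i. {x. R < \<bar>x $ i\<bar>})" by (auto simp: outs_def)
  moreover have "open {x::v3. R < \<bar>x $ i\<bar>}" for i
    by (intro open_Collect_less continuous_intros)
  ultimately show ?thesis by auto
qed

lemma outs_sets: "sets M = sets borel \<Longrightarrow> outs R \<in> sets M"
  using open_outs by simp

lemma approx_bound:
  fixes f g :: "v3 \<Rightarrow> real"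
  assumes M: "prob_space M" "sets M = sets borel"
    and f: "continuous_on UNIV f" "\<And>x. \<bar>f x\<bar> \<le> B"
    and g: "continuous_on UNIV g" "\<And>x. \<bar>g x\<bar> \<le> B'"
    and fg: "\<And>x. x \<notin> outs R \<Longrightarrow> \<bar>f x - g x\<bar> \<le> e"
    and e: "e \<ge> 0"
  shows "\<bar>(\<integral>x. f x \<partial>M) - (\<integral>x. g x \<partial>M)\<bar> \<le> e + (B + B') * measure M (outs R)"
proof -
  interpret prob_space M by fact
  have If: "integrable M f" using integrable_bc[OF M f(1), of B] f(2) by simp
  have Ig: "integrable M g" using integrable_bc[OF M g(1), of B'] g(2) by simp
  have Iind: "integrable M (indicat_real (outs R))"
    using outs_sets[OF M(2)] by (intro integrable_real_indicator) (auto simp: emeasure_eq_measure)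
  have Ii: "integrable M (\<lambda>x. e + (B + B') * indicator (outs R) x)"
    using Iind by simp
  have "\<bar>(\<integral>x. f x \<partial>M) - (\<integral>x. g x \<partial>M)\<bar> = \<bar>\<integral>x. f x - g x \<partial>M\<bar>"
    using If Ig by simp
  also have "\<dots> \<le> (\<integral>x. \<bar>f x - g x\<bar> \<partial>M)" by (rule integral_abs_bound)
  also have "\<dots> \<le> (\<integral>x. e + (B + B') * indicator (outs R) x \<partial>M)"
  proof (rule integral_mono[OF _ Ii])
    show "integrable M (\<lambda>x. \<bar>f x - g x\<bar>)" using If Ig by auto
    fix x
    show "\<bar>f x - g x\<bar> \<le> e + (B + B') * indicator (outs R) x"
    proof (cases "x \<in> outs R")
      case True
      have "\<bar>f x - g x\<bar> \<le> B + B'" using f(2)[of x] g(2)[of x] by linarith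
      then show ?thesis using True e by simp
    next
      case False
      then show ?thesis using fg[OF False] by simp
    qed
  qed
  also have "\<dots> = e + (B + B') * measure M (outs R)"
  proof -
    have "(\<integral>x. e + (B + B') * indicator (outs R) x \<partial>M) = (\<integral>x. e \<partial>M) + (\<integral>x. (B + B') * indicator (outs R) x \<partial>M)"
      by (intro Bochner_Integration.integral_add integrable_mult_right Iind integrable_const)
    also have "(\<integral>x. (B + B') * indicator (outs R) x \<partial>M) = (B + B') * (\<integral>x. indicator (outs R) x \<partial>M)"
      by (rule integral_mult_right_zero)
    also have "(\<integral>x. indicator (outs R) x \<partial>M) = measure M (outs R)"
      using outs_sets[OF M(2)] by (simp add: emeasure_eq_measure)
    finally show ?thesis by (simp add: prob_space)
  qed
  finally show ?thesis .
qed

lemma tri: "\<bar>a - b\<bar> \<le> e / 4 \<Longrightarrow> \<bar>c - d\<bar> \<le> e / 4 \<Longrightarrow> \<bar>b - d\<bar> < e / 4 \<Longrightarrow> \<bar>a - c\<bar> < (e::real)"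
  by arith

lemma weak_from_char:
  fixes M M' :: "nat \<Rightarrow> v3 measure" and f :: "v3 \<Rightarrow> real"
  assumes P: "\<And>n. prob_space (M n)" "\<And>n. sets (M n) = sets borel"
    and P': "\<And>n. prob_space (M' n)" "\<And>n. sets (M' n) = sets borel"
    and ch: "\<And>t. (\<lambda>n. charf (M n) t - charf (M' n) t) \<longlonglongrightarrow> 0"
    and tight: "\<And>\<eta>. \<eta> > 0 \<Longrightarrow> \<exists>R>0. eventually (\<lambda>n. measure (M n) (outs R) \<le> \<eta> \<and> measure (M' n) (outs R) \<le> \<eta>) sequentially"
    and f: "continuous_on UNIV f" and fB: "\<And>x. \<bar>f x\<bar> \<le> B"
  shows "(\<lambda>n. (\<integral>x. f x \<partial>M n) - (\<integral>x. f x \<partial>M' n)) \<longlonglongrightarrow> 0"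
proof (rule tendstoI)
  fix \<epsilon> :: real assume \<epsilon>: "\<epsilon> > 0"
  have B0: "B \<ge> 0" using fB[of 0] by linarith
  define e where "e = \<epsilon> / 8"
  define c where "c = 2 * B + e + 1"
  have e0: "e > 0" and c0: "c > 0" using \<epsilon> B0 by (auto simp: e_def c_def)
  obtain R where R: "R > 0" and ev1: "eventually (\<lambda>n. measure (M n) (outs R) \<le> \<epsilon> / (8 * c) \<and> measure (M' n) (outs R) \<le> \<epsilon> / (8 * c)) sequentially"
    using tight[of "\<epsilon> / (8 * c)"] \<epsilon> c0 by auto
  obtain g where g: "trigp g" "\<And>x. \<bar>g x\<bar> \<le> B + e" "\<And>x. (\<forall>i. \<bar>x $ i\<bar> \<le> R) \<Longrightarrow> \<bar>f x - g x\<bar> \<le> e"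
    using trig_approx[OF f fB R e0] by blast
  have gc: "continuous_on UNIV g" using trigp_bc[OF g(1)] by blast
  have fg: "\<bar>f x - g x\<bar> \<le> e" if "x \<notin> outs R" for x
    using that g(3)[of x] by (auto simp: outs_def not_less)
  have ev2: "eventually (\<lambda>n. dist ((\<integral>x. g x \<partial>M n) - (\<integral>x. g x \<partial>M' n)) 0 < \<epsilon> / 4) sequentially"
    using tendstoD[OF trigp_lim[OF g(1) P P' ch], of "\<epsilon>/4"] \<epsilon> by simp
  have key: "\<bar>(\<integral>x. f x \<partial>N) - (\<integral>x. g x \<partial>N)\<bar> \<le> \<epsilon> / 4"
    if N: "prob_space N" "sets N = sets borel" "measure N (outs R) \<le> \<epsilon> / (8 * c)" for N
  proof -
    have "\<bar>(\<integral>x. f x \<partial>N) - (\<integral>x. g x \<partial>N)\<bar> \<le> e + (B + (B + e)) * measure N (outs R)"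
      by (rule approx_bound[OF N(1,2) f fB gc g(2) fg]) (use e0 in auto)
    also have "\<dots> \<le> e + c * (\<epsilon> / (8 * c))"
      using N(3) B0 e0 by (intro add_left_mono mult_mono) (auto simp: c_def)
    also have "\<dots> = \<epsilon> / 4" using c0 by (simp add: e_def)
    finally show ?thesis .
  qed
  show "eventually (\<lambda>n. dist ((\<integral>x. f x \<partial>M n) - (\<integral>x. f x \<partial>M' n)) 0 < \<epsilon>) sequentially"
    using ev1 ev2
  proof eventually_elim
    case (elim n)
    have a: "\<bar>(\<integral>x. f x \<partial>M n) - (\<integral>x. g x \<partial>M n)\<bar> \<le> \<epsilon> / 4" using key[OF P(1) P(2)] elim by blast
    have b: "\<bar>(\<integral>x. f x \<partial>M' n) - (\<integral>x. g x \<partial>M' n)\<bar> \<le> \<epsilon> / 4" using key[OF P'(1) P'(2)] elim by blast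
    show ?case using tri[OF a b] elim(2) by (simp add: dist_real_def)
  qed
qed

lemma one_minus_cos_ge:
  fixes u :: real
  assumes "\<bar>u\<bar> \<le> 1"
  shows "u^2 / 4 \<le> 1 - cos u"
proof -
  obtain t where t: "cos u = (\<Sum>m<4. cos_coeff m * u^m) + cos (t + 1/2 * real 4 * pi) / fact 4 * u^4"
    using Maclaurin_cos_expansion by blast
  have s: "(\<Sum>m<4. cos_coeff m * u^m) = 1 - u^2/2"
  proof -
    have "(\<Sum>m<4. cos_coeff m * u^m) = cos_coeff 0 * u^0 + cos_coeff 1 * u^1 + cos_coeff 2 * u^2 + cos_coeff 3 * u^3"
      by (simp add: eval_nat_numeral)
    moreover have "cos_coeff 0 = 1" "cos_coeff 1 = 0" "cos_coeff 2 = - 1/2" "cos_coeff 3 = 0"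
      by (simp_all add: cos_coeff_def)
    ultimately show ?thesis by simp
  qed
  have f: "(fact 4 :: real) = 24" by (simp add: eval_nat_numeral)
  have c: "cos (t + 1/2 * real 4 * pi) / 24 * u^4 \<le> u^4 / 24"
  proof -
    have "cos (t + 1/2 * real 4 * pi) / 24 * u^4 \<le> 1 / 24 * u^4"
      by (intro mult_right_mono divide_right_mono) (auto simp: zero_le_even_power)
    then show ?thesis by simp
  qed
  have u2: "u^2 \<le> 1" using assms by (simp add: abs_le_square_iff power2_eq_square[symmetric] abs_square_le_1)
  have "u^4 = u^2 * u^2" by (simp add: eval_nat_numeral)
  also have "\<dots> \<le> u^2 * 1" by (intro mult_left_mono u2) simp
  finally have u4: "u^4 \<le> u^2" by simp
  have "cos u \<le> 1 - u^2/2 + u^4/24" using t s f c by simp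
  moreover have "0 \<le> u^2" by simp
  ultimately show ?thesis using u4 by linarith
qed

lemma Re_charf:
  assumes "prob_space M" "sets M = sets borel"
  shows "Re (charf M t) = (\<integral>x. cos (t \<bullet> x) \<partial>M)"
proof -
  have int: "integrable M (\<lambda>x. cis (t \<bullet> x))"
    by (rule integrable_bc[OF assms, where B=1]) (auto intro!: continuous_intros)
  show ?thesis unfolding charf_def
    using integral_bounded_linear[OF bounded_linear_Re int] by simp
qed

lemma tight_coord:
  fixes M :: "v3 measure"
  assumes M: "prob_space M" "sets M = sets borel"
    and bnd: "\<And>s. 0 < s \<Longrightarrow> s \<le> 1 \<Longrightarrow> Re (1 - charf M (s *\<^sub>R axis i 1)) \<le> C * s\<^sup>2"
    and R: "R > 0"
  shows "measure M {x. R < \<bar>x $ i\<bar>} \<le> 4 * C / R\<^sup>2"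
proof -
  interpret prob_space M by fact
  define A where "A n = {x::v3. R < \<bar>x $ i\<bar>} \<inter> {x. \<bar>x $ i\<bar> \<le> real (Suc n)}" for n
  have Aev: "A n \<in> sets M" for n
  proof -
    have "open {x::v3. R < \<bar>x $ i\<bar>}" by (intro open_Collect_less continuous_intros)
    moreover have "closed {x::v3. \<bar>x $ i\<bar> \<le> real (Suc n)}" by (intro closed_Collect_le continuous_intros)
    ultimately show ?thesis unfolding A_def using M(2) by auto
  qed
  have bound: "measure M (A n) \<le> 4 * C / R\<^sup>2" for n
  proof -
    define s where "s = 1 / real (Suc n)"
    have s0: "0 < s" "s \<le> 1" by (auto simp: s_def)
    define h where "h x = 2 * (1 - cos (s * x $ i)) / s\<^sup>2" for x :: v3
    have icos: "integrable M (\<lambda>x. cos (s * x $ i))"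
      by (rule integrable_bc[OF M, where B=1]) (auto intro!: continuous_intros)
    have ih: "integrable M h" unfolding h_def using icos by simp
    have "(\<integral>x. h x \<partial>M) = 2 / s\<^sup>2 * (1 - (\<integral>x. cos (s * x $ i) \<partial>M))"
      unfolding h_def using icos by (simp add: prob_space field_simps)
    also have "(\<integral>x. cos (s * x $ i) \<partial>M) = Re (charf M (s *\<^sub>R axis i 1))"
      by (simp add: Re_charf[OF M] inner_axis')
    also have "2 / s\<^sup>2 * (1 - Re (charf M (s *\<^sub>R axis i 1))) \<le> 2 / s\<^sup>2 * (C * s\<^sup>2)"
      using bnd[OF s0] s0 by (intro mult_left_mono) auto
    also have "\<dots> = 2 * C" using s0 by simp
    finally have ih2: "(\<integral>x. h x \<partial>M) \<le> 2 * C" .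
    have "R\<^sup>2 / 2 * measure M (A n) = (\<integral>x. R\<^sup>2 / 2 * indicator (A n) x \<partial>M)"
      using Aev by (simp add: emeasure_eq_measure)
    also have "\<dots> \<le> (\<integral>x. h x \<partial>M)"
    proof (rule integral_mono[OF _ ih])
      show "integrable M (\<lambda>x. R\<^sup>2 / 2 * indicat_real (A n) x)"
        using Aev by (intro integrable_mult_right integrable_real_indicator) (auto simp: emeasure_eq_measure)
      fix x :: v3
      show "R\<^sup>2 / 2 * indicat_real (A n) x \<le> h x"
      proof (cases "x \<in> A n")
        case True
        then have x1: "R < \<bar>x $ i\<bar>" "\<bar>x $ i\<bar> \<le> real (Suc n)" by (auto simp: A_def)
        have "\<bar>s * x $ i\<bar> \<le> 1" using x1(2) by (simp add: s_def abs_mult divide_le_eq_1)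
        then have c: "(s * x $ i)\<^sup>2 / 4 \<le> 1 - cos (s * x $ i)" by (rule one_minus_cos_ge)
        have "R\<^sup>2 \<le> (x $ i)\<^sup>2" using x1(1) R
          by (metis abs_of_pos less_imp_le power_mono power2_abs)
        also have "(x $ i)\<^sup>2 = 2 * ((s * x $ i)\<^sup>2 / 4) * 2 / s\<^sup>2" using s0 by (simp add: power_mult_distrib)
        also have "\<dots> \<le> 2 * (1 - cos (s * x $ i)) * 2 / s\<^sup>2"
          using c s0 by (intro divide_right_mono mult_right_mono mult_left_mono) auto
        finally show ?thesis using True by (simp add: h_def)
      next
        case False
        have "0 \<le> h x" unfolding h_def by simp
        then show ?thesis using False by simp
      qed
    qed
    finally have "R\<^sup>2 / 2 * measure M (A n) \<le> 2 * C" using ih2 by linarith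
    then show ?thesis using R by (simp add: field_simps)
  qed
  have inc: "incseq A" unfolding A_def incseq_def by auto
  have U: "(\<Union>n. A n) = {x. R < \<bar>x $ i\<bar>}"
  proof safe
    fix x :: v3 assume "R < \<bar>x $ i\<bar>"
    moreover obtain n where "\<bar>x $ i\<bar> \<le> real n" using real_arch_simple by blast
    ultimately show "x \<in> (\<Union>n. A n)" by (auto simp: A_def intro!: exI[of _ n])
  qed (auto simp: A_def)
  have "(\<lambda>n. measure M (A n)) \<longlonglongrightarrow> measure M (\<Union>n. A n)"
    using Aev inc by (intro finite_Lim_measure_incseq) auto
  then show ?thesis unfolding U using bound by (intro LIMSEQ_le_const2) auto
qed

lemma tight_char:
  fixes M :: "v3 measure"
  assumes M: "prob_space M" "sets M = sets borel"
    and bnd: "\<And>i s. 0 < s \<Longrightarrow> s \<le> 1 \<Longrightarrow> Re (1 - charf M (s *\<^sub>R axis i 1)) \<le> C * s\<^sup>2"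
    and R: "R > 0"
  shows "measure M (outs R) \<le> 12 * C / R\<^sup>2"
proof -
  interpret prob_space M by fact
  have ev: "{x::v3. R < \<bar>x $ i\<bar>} \<in> sets M" for i
    using M(2) by (simp add: open_Collect_less continuous_intros)
  have "outs R = (\<Union>i\<in>UNIV. {x. R < \<bar>x $ i\<bar>})" by (auto simp: outs_def)
  then have "measure M (outs R) \<le> (\<Sum>i\<in>UNIV. measure M {x. R < \<bar>x $ i\<bar>})"
    using ev by (simp add: finite_measure_subadditive_finite image_subset_iff)
  also have "\<dots> \<le> (\<Sum>i\<in>(UNIV::3 set). 4 * C / R\<^sup>2)"
    by (intro sum_mono tight_coord[OF M bnd R])
  also have "\<dots> = 12 * C / R\<^sup>2" by simp
  finally show ?thesis .
qed

definition wgt :: "real \<Rightarrow> real \<Rightarrow> int \<Rightarrow> real" where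
  "wgt \<alpha> \<beta> k = (if k = 1 then \<alpha> else if k = 0 then 1 - \<alpha> - \<beta> else if k = -1 then \<beta> else 0)"

definition S1 :: "int set" where "S1 = {1, 0, -1}"

lemma pmf_eps:
  assumes "\<alpha> \<ge> 0" "\<beta> \<ge> 0" "\<alpha> + \<beta> \<le> 1"
  shows "pmf (eps_pmf \<alpha> \<beta>) k = wgt \<alpha> \<beta> k"
proof -
  have e: "eps_pmf \<alpha> \<beta> = embed_pmf (wgt \<alpha> \<beta>)" by (simp add: eps_pmf_def wgt_def[abs_def])
  show ?thesis unfolding e
proof (rule pmf_embed_pmf)
  show "0 \<le> wgt \<alpha> \<beta> x" for x using assms by (simp add: wgt_def)
  have "(\<integral>\<^sup>+ x. ennreal (wgt \<alpha> \<beta> x) \<partial>count_space UNIV) = (\<Sum>x\<in>S1. ennreal (wgt \<alpha> \<beta> x))"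
    by (rule nn_integral_count_space') (auto simp: S1_def wgt_def)
  also have "\<dots> = ennreal (\<Sum>x\<in>S1. wgt \<alpha> \<beta> x)"
    using assms by (intro sum_ennreal) (auto simp: wgt_def)
  also have "(\<Sum>x\<in>S1. wgt \<alpha> \<beta> x) = 1" by (simp add: S1_def wgt_def)
  finally show "(\<integral>\<^sup>+ x. ennreal (wgt \<alpha> \<beta> x) \<partial>count_space UNIV) = 1" by simp
qed
qed

lemma E_eps3:
  fixes f :: "int \<times> int \<times> int \<Rightarrow> real"
  assumes "\<alpha> \<ge> 0" "\<beta> \<ge> 0" "\<alpha> + \<beta> \<le> 1"
  shows "measure_pmf.expectation (eps3_pmf \<alpha> \<beta>) f =
    (\<Sum>e\<in>S1 \<times> S1 \<times> S1. f e * (wgt \<alpha> \<beta> (fst e) * wgt \<alpha> \<beta> (fst (snd e)) * wgt \<alpha> \<beta> (snd (snd e))))"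
proof -
  have p: "pmf (eps3_pmf \<alpha> \<beta>) e = wgt \<alpha> \<beta> (fst e) * wgt \<alpha> \<beta> (fst (snd e)) * wgt \<alpha> \<beta> (snd (snd e))" for e
    by (cases e) (simp add: eps3_pmf_def pmf_pair pmf_eps[OF assms])
  have "measure_pmf.expectation (eps3_pmf \<alpha> \<beta>) f = (\<Sum>e\<in>S1 \<times> S1 \<times> S1. f e * pmf (eps3_pmf \<alpha> \<beta>) e)"
  proof (rule integral_measure_pmf_real)
    show "finite (S1 \<times> S1 \<times> S1)" by (simp add: S1_def)
    fix e assume "e \<in> set_pmf (eps3_pmf \<alpha> \<beta>)"
    then have "pmf (eps3_pmf \<alpha> \<beta>) e \<noteq> 0" by (simp add: set_pmf_iff)
    then show "e \<in> S1 \<times> S1 \<times> S1" unfolding p by (cases e) (auto simp: wgt_def S1_def split: if_splits)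
  qed
  then show ?thesis by (simp add: p)
qed

definition Xv :: "real \<Rightarrow> int \<times> int \<times> int \<Rightarrow> v3" where
  "Xv a e = vector [Yval a (fst e), \<bar>Yval a (fst (snd e)) - Yval a (fst e)\<bar> / 2,
     (let d = Yval a (snd (snd e)) - 2 * Yval a (fst (snd e)) + Yval a (fst e)
      in if d = 1 \<or> d = -2 then 1 else 0) / 3]"

definition mv :: "real \<Rightarrow> real \<Rightarrow> real \<Rightarrow> v3" where
  "mv \<alpha> \<beta> a = vector [u1 \<alpha> \<beta> a, u2 \<alpha> \<beta> a, u3 \<alpha> \<beta> a]"

definition Zv :: "real \<Rightarrow> real \<Rightarrow> real \<Rightarrow> int \<times> int \<times> int \<Rightarrow> v3" where
  "Zv \<alpha> \<beta> a e = Xv a e - mv \<alpha> \<beta> a"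

definition w3 :: "real \<Rightarrow> real \<Rightarrow> int \<times> int \<times> int \<Rightarrow> real" where
  "w3 \<alpha> \<beta> e = wgt \<alpha> \<beta> (fst e) * wgt \<alpha> \<beta> (fst (snd e)) * wgt \<alpha> \<beta> (snd (snd e))"

lemma three_cases: "(i::3) = 1 \<or> i = 2 \<or> i = 3" by (rule exhaust_3)

lemma Ew_expand: "(\<Sum>e\<in>S1 \<times> S1 \<times> S1. g e * w3 \<alpha> \<beta> e) =
  (\<Sum>x\<in>S1. \<Sum>y\<in>S1. \<Sum>z\<in>S1. g (x, y, z) * (wgt \<alpha> \<beta> x * wgt \<alpha> \<beta> y * wgt \<alpha> \<beta> z))"
  by (simp add: sum.cartesian_product w3_def split_def)

lemma S1_sum_Y:
  assumes "a = 0 \<or> a = 1"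
  shows "(\<Sum>x\<in>S1. wgt \<alpha> \<beta> x * H (Yval a x)) = u1 \<alpha> \<beta> a * H 1 + (1 - u1 \<alpha> \<beta> a) * H 0"
  using assms by (auto simp: S1_def wgt_def Yval_def u1_def algebra_simps)

definition B3 :: "real \<Rightarrow> (real \<Rightarrow> real \<Rightarrow> real \<Rightarrow> real) \<Rightarrow> real" where
  "B3 q F = q * (q * (q * F 1 1 1 + (1 - q) * F 1 1 0) + (1 - q) * (q * F 1 0 1 + (1 - q) * F 1 0 0))
     + (1 - q) * (q * (q * F 0 1 1 + (1 - q) * F 0 1 0) + (1 - q) * (q * F 0 0 1 + (1 - q) * F 0 0 0))"

lemma Ew_Y:
  assumes a: "a = 0 \<or> a = 1"
  shows "(\<Sum>e\<in>S1 \<times> S1 \<times> S1. F (Yval a (fst e)) (Yval a (fst (snd e))) (Yval a (snd (snd e))) * w3 \<alpha> \<beta> e)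
    = B3 (u1 \<alpha> \<beta> a) F"
proof -
  define q where "q = u1 \<alpha> \<beta> a"
  have inner: "(\<Sum>z\<in>S1. wgt \<alpha> \<beta> z * F u v (Yval a z)) = q * F u v 1 + (1 - q) * F u v 0" for u v
    unfolding q_def by (rule S1_sum_Y[OF a])
  have mid: "(\<Sum>y\<in>S1. wgt \<alpha> \<beta> y * (q * F u (Yval a y) 1 + (1 - q) * F u (Yval a y) 0))
     = q * (q * F u 1 1 + (1 - q) * F u 1 0) + (1 - q) * (q * F u 0 1 + (1 - q) * F u 0 0)" for u
    unfolding q_def by (rule S1_sum_Y[OF a, of _ _ "\<lambda>v. u1 \<alpha> \<beta> a * F u v 1 + (1 - u1 \<alpha> \<beta> a) * F u v 0"])
  have outer: "(\<Sum>x\<in>S1. wgt \<alpha> \<beta> x * (q * (q * F (Yval a x) 1 1 + (1 - q) * F (Yval a x) 1 0) + (1 - q) * (q * F (Yval a x) 0 1 + (1 - q) * F (Yval a x) 0 0)))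
     = B3 q F"
    unfolding q_def B3_def by (rule S1_sum_Y[OF a, of _ _ "\<lambda>v. u1 \<alpha> \<beta> a * (u1 \<alpha> \<beta> a * F v 1 1 + (1 - u1 \<alpha> \<beta> a) * F v 1 0) + (1 - u1 \<alpha> \<beta> a) * (u1 \<alpha> \<beta> a * F v 0 1 + (1 - u1 \<alpha> \<beta> a) * F v 0 0)"])
  have "(\<Sum>e\<in>S1 \<times> S1 \<times> S1. F (Yval a (fst e)) (Yval a (fst (snd e))) (Yval a (snd (snd e))) * w3 \<alpha> \<beta> e)
     = (\<Sum>x\<in>S1. wgt \<alpha> \<beta> x * (\<Sum>y\<in>S1. wgt \<alpha> \<beta> y * (\<Sum>z\<in>S1. wgt \<alpha> \<beta> z * F (Yval a x) (Yval a y) (Yval a z))))"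
    unfolding Ew_expand by (simp add: sum_distrib_left mult_ac)
  also have "\<dots> = B3 q F" by (simp only: inner mid outer)
  finally show ?thesis by (simp add: q_def)
qed

definition Xf :: "real \<Rightarrow> real \<Rightarrow> real \<Rightarrow> v3" where
  "Xf y0 y1 y2 = vector [y0, \<bar>y1 - y0\<bar> / 2,
     (let d = y2 - 2 * y1 + y0 in if d = 1 \<or> d = -2 then 1 else 0) / 3]"

definition mq :: "real \<Rightarrow> v3" where
  "mq q = vector [q, q * (1 - q), q * (1 - q)\<^sup>2]"

definition Sq :: "real \<Rightarrow> real^3^3" where
  "Sq q = (let k = q * (1 - q) in
    vector [vector [k, k * (1/2 - q), k * ((1 - q)\<^sup>2/3 - 2 * k/3)],
            vector [k * (1/2 - q), k * (1/2 - k), (1 - q) * k * (1/3 - k)],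
            vector [k * ((1 - q)\<^sup>2/3 - 2 * k/3), (1 - q) * k * (1/3 - k), k * (1 - q) * (1/3 - k * (1 - q))]])"

lemma Xv_Xf: "Xv a e = Xf (Yval a (fst e)) (Yval a (fst (snd e))) (Yval a (snd (snd e)))"
  by (simp add: Xv_def Xf_def)

lemma mv_mq: "a = 0 \<or> a = 1 \<Longrightarrow> mv \<alpha> \<beta> a = mq (u1 \<alpha> \<beta> a)"
  by (auto simp: mv_def mq_def u1_def u2_def u3_def algebra_simps power2_eq_square)

lemma Sigma_Sq: "a = 0 \<or> a = 1 \<Longrightarrow> Sigma \<alpha> \<beta> a $ i $ j = Sq (u1 \<alpha> \<beta> a) $ i $ j"
  using three_cases[of i] three_cases[of j]
  by (auto simp: Sigma_def Sq_def Let_def u1_def algebra_simps power2_eq_square)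

lemma Zv_Xf: "a = 0 \<or> a = 1 \<Longrightarrow> Zv \<alpha> \<beta> a e = Xf (Yval a (fst e)) (Yval a (fst (snd e))) (Yval a (snd (snd e))) - mq (u1 \<alpha> \<beta> a)"
  by (simp add: Zv_def Xv_Xf mv_mq)

lemma B3_mean: "B3 q (\<lambda>y0 y1 y2. (Xf y0 y1 y2 - mq q) $ i) = 0"
  using three_cases[of i]
  by (auto simp: B3_def Xf_def mq_def Let_def algebra_simps power2_eq_square)

lemma B3_cov: "B3 q (\<lambda>y0 y1 y2. (Xf y0 y1 y2 - mq q) $ i * (Xf y0 y1 y2 - mq q) $ j) = Sq q $ i $ j"
  using three_cases[of i] three_cases[of j]
  apply (auto simp: B3_def Xf_def mq_def Sq_def Let_def algebra_simps power2_eq_square)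
  apply (simp_all add: field_simps)
  done

locale abc =
  fixes \<alpha> \<beta> :: real
  assumes a0: "\<alpha> \<ge> 0" and b0: "\<beta> \<ge> 0" and ab: "\<alpha> + \<beta> \<le> 1"
begin

lemma set_eps3: "set_pmf (eps3_pmf \<alpha> \<beta>) \<subseteq> S1 \<times> S1 \<times> S1"
proof
  fix e assume "e \<in> set_pmf (eps3_pmf \<alpha> \<beta>)"
  then have "pmf (eps3_pmf \<alpha> \<beta>) e \<noteq> 0" by (simp add: set_pmf_iff)
  then show "e \<in> S1 \<times> S1 \<times> S1"
    by (cases e) (auto simp: eps3_pmf_def pmf_pair pmf_eps[OF a0 b0 ab] wgt_def S1_def split: if_splits)
qed

lemma fin_eps3: "finite (set_pmf (eps3_pmf \<alpha> \<beta>))"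
  by (rule finite_subset[OF set_eps3]) (simp add: S1_def)

lemma E3: "measure_pmf.expectation (eps3_pmf \<alpha> \<beta>) f = (\<Sum>e\<in>S1 \<times> S1 \<times> S1. f e * w3 \<alpha> \<beta> e)"
  unfolding E_eps3[OF a0 b0 ab] w3_def ..

lemma int3: "integrable (measure_pmf (eps3_pmf \<alpha> \<beta>)) (f :: _ \<Rightarrow> 'b::{banach, second_countable_topology})"
  using fin_eps3 by (rule integrable_measure_pmf_finite)

lemma Yval01: "a = 0 \<or> a = 1 \<Longrightarrow> Yval a e = 0 \<or> Yval a e = 1"
  by (auto simp: Yval_def)

lemma Xv_bound: assumes "a = 0 \<or> a = 1" shows "0 \<le> Xv a e $ i \<and> Xv a e $ i \<le> 1"
proof -
  have y: "\<And>e. Yval a e = 0 \<or> Yval a e = 1" using Yval01[OF assms] by blast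
  show ?thesis
    using three_cases[of i] y[of "fst e"] y[of "fst (snd e)"] y[of "snd (snd e)"]
    by (auto simp: Xv_def Let_def)
qed

lemma mv_bound: assumes "a = 0 \<or> a = 1" shows "0 \<le> mv \<alpha> \<beta> a $ i \<and> mv \<alpha> \<beta> a $ i \<le> 1"
proof -
  have A: "0 \<le> \<alpha>" "\<alpha> \<le> 1" "0 \<le> \<beta>" "\<beta> \<le> 1" using a0 b0 ab by auto
  have p: "0 \<le> x * y \<and> x * y \<le> 1" if "0 \<le> x" "x \<le> 1" "0 \<le> y" "y \<le> 1" for x y :: real
    using that by (auto intro: mult_le_one)
  have "0 \<le> \<alpha> * (1 - \<alpha>) \<and> \<alpha> * (1 - \<alpha>) \<le> 1" using p A by auto
  moreover have "0 \<le> \<beta> * (1 - \<beta>) \<and> \<beta> * (1 - \<beta>) \<le> 1" using p A by auto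
  moreover have "0 \<le> \<alpha> * (1 - \<alpha>)\<^sup>2 \<and> \<alpha> * (1 - \<alpha>)\<^sup>2 \<le> 1"
    using p[of \<alpha> "(1 - \<alpha>)\<^sup>2"] A by (auto simp: power_le_one)
  moreover have "0 \<le> \<beta>\<^sup>2 * (1 - \<beta>) \<and> \<beta>\<^sup>2 * (1 - \<beta>) \<le> 1"
    using p[of "\<beta>\<^sup>2" "1 - \<beta>"] A by (auto simp: power_le_one)
  ultimately show ?thesis using assms three_cases[of i] A
    by (auto simp: mv_def u1_def u2_def u3_def mult.assoc)
qed

lemma Zv_bound: assumes "a = 0 \<or> a = 1" shows "\<bar>Zv \<alpha> \<beta> a e $ i\<bar> \<le> 1"
  using Xv_bound[OF assms, of e i] mv_bound[OF assms, of i] by (simp add: Zv_def abs_le_iff)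

definition L :: "v3 \<Rightarrow> real" where "L t = (\<Sum>i\<in>UNIV. \<bar>t $ i\<bar>)"

lemma L_nonneg: "L t \<ge> 0" by (simp add: L_def sum_nonneg)

lemma inner_Zv_bound: assumes "a = 0 \<or> a = 1" shows "\<bar>t \<bullet> Zv \<alpha> \<beta> a e\<bar> \<le> L t"
proof -
  have "\<bar>t \<bullet> Zv \<alpha> \<beta> a e\<bar> = \<bar>\<Sum>i\<in>UNIV. t $ i * Zv \<alpha> \<beta> a e $ i\<bar>" by (simp add: inner_vec_def)
  also have "\<dots> \<le> (\<Sum>i\<in>UNIV. \<bar>t $ i * Zv \<alpha> \<beta> a e $ i\<bar>)" by (rule sum_abs)
  also have "\<dots> \<le> (\<Sum>i\<in>UNIV. \<bar>t $ i\<bar>)"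
    using Zv_bound[OF assms] by (intro sum_mono) (simp add: abs_mult mult_left_le)
  finally show ?thesis by (simp add: L_def)
qed

lemma mean_Zi: assumes a: "a = 0 \<or> a = 1"
  shows "(\<Sum>e\<in>S1 \<times> S1 \<times> S1. Zv \<alpha> \<beta> a e $ i * w3 \<alpha> \<beta> e) = 0"
  using Ew_Y[OF a, where F="\<lambda>y0 y1 y2. (Xf y0 y1 y2 - mq (u1 \<alpha> \<beta> a)) $ i" and \<alpha>=\<alpha> and \<beta>=\<beta>] B3_mean
  by (simp add: Zv_Xf[OF a])

lemma cov_Zij: assumes a: "a = 0 \<or> a = 1"
  shows "(\<Sum>e\<in>S1 \<times> S1 \<times> S1. (Zv \<alpha> \<beta> a e $ i * Zv \<alpha> \<beta> a e $ j) * w3 \<alpha> \<beta> e) = Sigma \<alpha> \<beta> a $ i $ j"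
  using Ew_Y[OF a, where F="\<lambda>y0 y1 y2. (Xf y0 y1 y2 - mq (u1 \<alpha> \<beta> a)) $ i * (Xf y0 y1 y2 - mq (u1 \<alpha> \<beta> a)) $ j" and \<alpha>=\<alpha> and \<beta>=\<beta>] B3_cov
  by (simp add: Zv_Xf[OF a] Sigma_Sq[OF a])

lemma swap1: "(\<Sum>e\<in>E. (\<Sum>i\<in>I. c i * g i e) * w e :: real) = (\<Sum>i\<in>I. c i * (\<Sum>e\<in>E. g i e * w e))"
proof -
  have "(\<Sum>e\<in>E. (\<Sum>i\<in>I. c i * g i e) * w e) = (\<Sum>e\<in>E. \<Sum>i\<in>I. c i * (g i e * w e))"
    by (simp add: sum_distrib_right mult.assoc)
  also have "\<dots> = (\<Sum>i\<in>I. \<Sum>e\<in>E. c i * (g i e * w e))" by (rule sum.swap)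
  also have "\<dots> = (\<Sum>i\<in>I. c i * (\<Sum>e\<in>E. g i e * w e))" by (simp add: sum_distrib_left)
  finally show ?thesis .
qed

lemma swap2: "(\<Sum>e\<in>E. (\<Sum>i\<in>I. \<Sum>j\<in>J. c i j * g i j e) * w e :: real) = (\<Sum>i\<in>I. \<Sum>j\<in>J. c i j * (\<Sum>e\<in>E. g i j e * w e))"
proof -
  have "(\<Sum>e\<in>E. (\<Sum>i\<in>I. \<Sum>j\<in>J. c i j * g i j e) * w e) = (\<Sum>e\<in>E. \<Sum>i\<in>I. (\<Sum>j\<in>J. c i j * g i j e) * w e)"
    by (simp add: sum_distrib_right)
  also have "\<dots> = (\<Sum>i\<in>I. \<Sum>e\<in>E. (\<Sum>j\<in>J. c i j * g i j e) * w e)" by (rule sum.swap)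
  also have "\<dots> = (\<Sum>i\<in>I. \<Sum>j\<in>J. c i j * (\<Sum>e\<in>E. g i j e * w e))"
    by (rule sum.cong[OF refl], rule swap1)
  finally show ?thesis .
qed

lemma quad_form: "t \<bullet> (S *v t) = (\<Sum>i\<in>UNIV. \<Sum>j\<in>UNIV. (t $ i * t $ j) * S $ i $ j)"
  by (simp add: inner_vec_def matrix_vector_mult_def sum_distrib_left mult_ac)

lemma E_inner_mean: assumes a: "a = 0 \<or> a = 1"
  shows "measure_pmf.expectation (eps3_pmf \<alpha> \<beta>) (\<lambda>e. t \<bullet> Zv \<alpha> \<beta> a e) = 0"
  unfolding E3 inner_vec_def inner_real_def swap1 using mean_Zi[OF a] by simp

definition qf :: "v3 \<Rightarrow> real \<Rightarrow> real" where "qf t x = t \<bullet> (Sigma \<alpha> \<beta> x *v t)"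

lemma E_inner_sq: assumes a: "a = 0 \<or> a = 1"
  shows "measure_pmf.expectation (eps3_pmf \<alpha> \<beta>) (\<lambda>e. (t \<bullet> Zv \<alpha> \<beta> a e)\<^sup>2) = qf t a"
proof -
  have sq: "(t \<bullet> z)\<^sup>2 = (\<Sum>i\<in>UNIV. \<Sum>j\<in>UNIV. (t $ i * t $ j) * (z $ i * z $ j))" for z :: v3
    by (simp add: inner_vec_def power2_eq_square sum_product mult_ac)
  show ?thesis
    unfolding E3 sq swap2 qf_def quad_form using cov_Zij[OF a] by simp
qed

lemma qf_nonneg: assumes a: "a = 0 \<or> a = 1" shows "qf t a \<ge> 0"
proof -
  have "qf t a = measure_pmf.expectation (eps3_pmf \<alpha> \<beta>) (\<lambda>e. (t \<bullet> Zv \<alpha> \<beta> a e)\<^sup>2)"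
    using E_inner_sq[OF a] by simp
  also have "\<dots> \<ge> 0" by simp
  finally show ?thesis .
qed

lemma qf_le: assumes a: "a = 0 \<or> a = 1" shows "qf t a \<le> (L t)\<^sup>2"
proof -
  have "qf t a = measure_pmf.expectation (eps3_pmf \<alpha> \<beta>) (\<lambda>e. (t \<bullet> Zv \<alpha> \<beta> a e)\<^sup>2)"
    using E_inner_sq[OF a] by simp
  also have "\<dots> \<le> measure_pmf.expectation (eps3_pmf \<alpha> \<beta>) (\<lambda>e. (L t)\<^sup>2)"
  proof (rule integral_mono[OF int3 int3])
    fix e
    show "(t \<bullet> Zv \<alpha> \<beta> a e)\<^sup>2 \<le> (L t)\<^sup>2"
      using inner_Zv_bound[OF a, of t e] by (metis abs_ge_zero power2_abs power_mono)
  qed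
  also have "\<dots> = (L t)\<^sup>2" by simp
  finally show ?thesis .
qed

lemma Sigma_affine: "Sigma \<alpha> \<beta> x $ i $ j = (1 - x) * Sigma \<alpha> \<beta> 0 $ i $ j + x * Sigma \<alpha> \<beta> 1 $ i $ j"
  using three_cases[of i] three_cases[of j]
  by (auto simp: Sigma_def Let_def)

lemma qf_affine: "qf t x = (1 - x) * qf t 0 + x * qf t 1"
proof -
  have e: "(t $ i * t $ j) * Sigma \<alpha> \<beta> x $ i $ j = (1 - x) * ((t $ i * t $ j) * Sigma \<alpha> \<beta> 0 $ i $ j) + x * ((t $ i * t $ j) * Sigma \<alpha> \<beta> 1 $ i $ j)" for i j
    by (subst Sigma_affine) (simp add: algebra_simps)
  show ?thesis unfolding qf_def quad_form
    by (simp only: e sum.distrib sum_distrib_left[symmetric])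
qed

lemma char_factor: assumes a: "a = 0 \<or> a = 1"
  shows "cmod (measure_pmf.expectation (eps3_pmf \<alpha> \<beta>) (\<lambda>e. cis (c * (t \<bullet> Zv \<alpha> \<beta> a e)))
           - complex_of_real (1 - c\<^sup>2 * qf t a / 2)) \<le> \<bar>c\<bar>^3 * (L t)^3 / 6"
proof -
  define s where "s e = c * (t \<bullet> Zv \<alpha> \<beta> a e)" for e
  let ?E = "measure_pmf.expectation (eps3_pmf \<alpha> \<beta>)"
  have "?E (\<lambda>e. c * (t \<bullet> Zv \<alpha> \<beta> a e)) = c * ?E (\<lambda>e. t \<bullet> Zv \<alpha> \<beta> a e)"
    by (rule integral_mult_right_zero)
  then have Es: "?E s = 0" unfolding s_def[abs_def] using E_inner_mean[OF a] by simp
  have Es2: "?E (\<lambda>e. (s e)\<^sup>2) = c\<^sup>2 * qf t a"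
    unfolding s_def power_mult_distrib using E_inner_sq[OF a] by simp
  have Es1c: "?E (\<lambda>e. complex_of_real (s e)) = 0" using Es by (simp add: integral_complex_of_real)
  have Es2c: "?E (\<lambda>e. (complex_of_real (s e))\<^sup>2) = complex_of_real (c\<^sup>2 * qf t a)"
    using Es2 integral_complex_of_real[of _ "\<lambda>e. (s e)\<^sup>2"] by (simp del: of_real_mult)
  define h where "h e = cis (s e) - (1 + \<i> * complex_of_real (s e) - complex_of_real ((s e)\<^sup>2) / 2)" for e
  have Eh: "(\<integral>e. h e \<partial>measure_pmf (eps3_pmf \<alpha> \<beta>)) = ?E (\<lambda>e. cis (s e)) - complex_of_real (1 - c\<^sup>2 * qf t a / 2)"
  proof -
    have "(\<integral>e. h e \<partial>measure_pmf (eps3_pmf \<alpha> \<beta>)) = ?E (\<lambda>e. cis (s e)) -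
        (1 + \<i> * ?E (\<lambda>e. complex_of_real (s e)) - ?E (\<lambda>e. complex_of_real ((s e)\<^sup>2)) / 2)"
      unfolding h_def by (simp add: int3)
    also have "\<dots> = ?E (\<lambda>e. cis (s e)) - complex_of_real (1 - c\<^sup>2 * qf t a / 2)"
      by (simp add: Es1c Es2c Es Es2 integral_complex_of_real)
    finally show ?thesis .
  qed
  have hb: "cmod (h e) \<le> \<bar>c\<bar>^3 * (L t)^3 / 6" for e
  proof -
    have "(\<Sum>k\<le>2. (\<i> * complex_of_real (s e))^k / fact k) = 1 + \<i> * complex_of_real (s e) - complex_of_real ((s e)\<^sup>2) / 2"
      by (simp add: eval_nat_numeral power2_eq_square field_simps)
    then have "cmod (h e) \<le> \<bar>s e\<bar> ^ 3 / 6"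
      using iexp_approx1[of "s e" 2] by (simp add: h_def cis_conv_exp eval_nat_numeral)
    also have "\<bar>s e\<bar> ^ 3 \<le> (\<bar>c\<bar> * L t)^3"
      unfolding s_def abs_mult using inner_Zv_bound[OF a, of t e]
      by (intro power_mono mult_left_mono) auto
    finally show ?thesis by (simp add: power_mult_distrib)
  qed
  have "cmod (\<integral>e. h e \<partial>measure_pmf (eps3_pmf \<alpha> \<beta>)) \<le> (\<integral>e. cmod (h e) \<partial>measure_pmf (eps3_pmf \<alpha> \<beta>))"
    by (rule integral_norm_bound)
  also have "\<dots> \<le> (\<integral>e. \<bar>c\<bar>^3 * (L t)^3 / 6 \<partial>measure_pmf (eps3_pmf \<alpha> \<beta>))"
    by (rule integral_mono[OF int3 int3 hb])
  also have "\<dots> = \<bar>c\<bar>^3 * (L t)^3 / 6" by simp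
  finally show ?thesis unfolding Eh s_def .
qed

lemma char_factor_norm: "cmod (measure_pmf.expectation (eps3_pmf \<alpha> \<beta>) (\<lambda>e. cis (g e))) \<le> 1"
proof -
  have "cmod (measure_pmf.expectation (eps3_pmf \<alpha> \<beta>) (\<lambda>e. cis (g e))) \<le> measure_pmf.expectation (eps3_pmf \<alpha> \<beta>) (\<lambda>e. cmod (cis (g e)))"
    by (rule integral_norm_bound)
  then show ?thesis by simp
qed

end

lemma exp_approx:
  fixes y :: real assumes y: "y \<ge> 0"
  shows "\<bar>exp (- y) - (1 - y)\<bar> \<le> y\<^sup>2 / 2"
proof -
  have lo: "1 - y \<le> exp (- y)" using exp_ge_add_one_self[of "-y"] by simp
  have "1 + y + y\<^sup>2 / 2 \<le> exp y" using exp_lower_Taylor_quadratic[OF y] .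
  then have "exp (- y) \<le> 1 / (1 + y + y\<^sup>2 / 2)"
    using y by (simp add: exp_minus divide_simps) (smt (verit) zero_le_power2)
  also have "\<dots> \<le> 1 - y + y\<^sup>2 / 2"
  proof -
    have pos: "0 < 1 + y + y\<^sup>2 / 2" using y by (simp add: add_pos_nonneg)
    have e: "(1 - y + y\<^sup>2 / 2) * (1 + y + y\<^sup>2 / 2) = 1 + y^4 / 4"
      by (simp add: algebra_simps power2_eq_square power4_eq_xxxx)
    have "0 \<le> y^4" using y by simp
    then have "1 \<le> (1 - y + y\<^sup>2 / 2) * (1 + y + y\<^sup>2 / 2)" unfolding e by simp
    then show ?thesis using pos by (simp add: divide_le_eq)
  qed
  finally show ?thesis using lo by simp
qed

lemma finite_pairs: "finite (pairs p)"
  unfolding pairs_def by (rule finite_subset[of _ "{..<p} \<times> {..<p}"]) auto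

lemma pairs_Suc: "pairs (Suc p) = pairs p \<union> (\<lambda>i. (i, p)) ` {..<p}"
  by (auto simp: pairs_def)

lemma card_pairs_nat: "2 * card (pairs p) = p * (p - 1)"
proof (induction p)
  case 0 then show ?case by (simp add: pairs_def)
next
  case (Suc p)
  have "pairs p \<inter> (\<lambda>i. (i, p)) ` {..<p} = {}" by (auto simp: pairs_def)
  then have "card (pairs (Suc p)) = card (pairs p) + p"
    by (simp add: pairs_Suc card_Un_disjoint finite_pairs card_image inj_on_def)
  with Suc show ?case by (cases p) (auto simp: algebra_simps)
qed

lemma card_pairs: "real (card (pairs p)) = real p * (real p - 1) / 2"
proof -
  have "real (2 * card (pairs p)) = real (p * (p - 1))" by (simp only: card_pairs_nat)
  then show ?thesis by (cases p) (auto simp: algebra_simps)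
qed

lemma expect_prod_Pi:
  fixes F :: "'k \<Rightarrow> 'a \<Rightarrow> complex"
  assumes fin: "finite I" and bnd: "\<And>k x. norm (F k x) \<le> 1"
  shows "measure_pmf.expectation (Pi_pmf I d P) (\<lambda>\<omega>. \<Prod>k\<in>I. F k (\<omega> k)) =
         (\<Prod>k\<in>I. measure_pmf.expectation (P k) (F k))"
proof -
  have ind: "prob_space.indep_vars (measure_pmf (Pi_pmf I d P)) (\<lambda>_. borel) (\<lambda>k \<omega>. F k (\<omega> k)) I"
    using prob_space.indep_vars_compose2[OF measure_pmf.prob_space_axioms indep_vars_Pi_pmf[OF fin], of "\<lambda>k x. F k x" "\<lambda>_. borel"] by simp
  have int: "integrable (measure_pmf (Pi_pmf I d P)) (\<lambda>\<omega>. F k (\<omega> k))" for k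
    by (rule measure_pmf.integrable_const_bound[where B=1]) (auto simp: bnd)
  have "measure_pmf.expectation (Pi_pmf I d P) (\<lambda>\<omega>. \<Prod>k\<in>I. F k (\<omega> k)) =
        (\<Prod>k\<in>I. measure_pmf.expectation (Pi_pmf I d P) (\<lambda>\<omega>. F k (\<omega> k)))"
    by (rule prob_space.indep_vars_lebesgue_integral[OF measure_pmf.prob_space_axioms fin ind int])
  also have "\<dots> = (\<Prod>k\<in>I. measure_pmf.expectation (P k) (F k))"
  proof (rule prod.cong[OF refl])
    fix k assume k: "k \<in> I"
    have "measure_pmf.expectation (Pi_pmf I d P) (\<lambda>\<omega>. F k (\<omega> k)) =
          measure_pmf.expectation (map_pmf (\<lambda>\<omega>. \<omega> k) (Pi_pmf I d P)) (F k)"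
      by (simp add: integral_map_pmf)
    also have "\<dots> = measure_pmf.expectation (P k) (F k)"
      using k by (simp add: Pi_pmf_component[OF fin])
    finally show "measure_pmf.expectation (Pi_pmf I d P) (\<lambda>\<omega>. F k (\<omega> k)) = measure_pmf.expectation (P k) (F k)" .
  qed
  finally show ?thesis .
qed

lemma cis_sum: "finite I \<Longrightarrow> cis (\<Sum>k\<in>I. f k) = (\<Prod>k\<in>I. cis (f k))"
  by (induction I rule: finite_induct) (simp_all add: cis_mult[symmetric])

lemma affine_sum:
  fixes g :: "real \<Rightarrow> real"
  assumes "finite I" "card I > 0" "\<And>x. g x = g0 + x * g1"
  shows "(\<Sum>k\<in>I. g (a k)) = real (card I) * g ((\<Sum>k\<in>I. a k) / real (card I))"
  using assms by (simp add: sum.distrib sum_distrib_left[symmetric] algebra_simps)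

lemma prod_close:
  fixes a b :: "'k \<Rightarrow> complex"
  assumes "\<And>k. k \<in> I \<Longrightarrow> norm (a k) \<le> 1" "\<And>k. k \<in> I \<Longrightarrow> norm (b k) \<le> 1"
    "\<And>k. k \<in> I \<Longrightarrow> norm (a k - b k) \<le> \<epsilon>"
  shows "norm ((\<Prod>k\<in>I. a k) - (\<Prod>k\<in>I. b k)) \<le> real (card I) * \<epsilon>"
proof -
  have "norm ((\<Prod>k\<in>I. a k) - (\<Prod>k\<in>I. b k)) \<le> (\<Sum>k\<in>I. norm (a k - b k))"
    by (rule norm_prod_diff) (use assms in auto)
  also have "\<dots> \<le> (\<Sum>k\<in>I. \<epsilon>)" by (rule sum_mono) (use assms in auto)
  also have "\<dots> = real (card I) * \<epsilon>" by simp
  finally show ?thesis .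
qed

lemma two_div: "2 / (x::real) * S = S / (x / 2)"
  by (cases "x = 0") (simp_all add: field_simps)

lemma sqrt_aux: "(N::real) > 0 \<Longrightarrow> sqrt N * (X / N - U / N) = 1 / sqrt N * (X - U)"
proof -
  assume N: "N > 0"
  have "sqrt N * sqrt N = N" using N by simp
  then show ?thesis using N by (simp add: field_simps)
qed

context abc
begin

lemma L_axis: "L (s *\<^sub>R axis i 1) = \<bar>s\<bar>"
proof -
  have "(\<Sum>j\<in>UNIV. \<bar>(s *\<^sub>R axis i (1::real)) $ j\<bar>) = (\<Sum>j\<in>UNIV. if j = i then \<bar>s\<bar> else 0)"
    by (intro sum.cong) (auto simp: axis_def)
  also have "\<dots> = \<bar>s\<bar>" by simp
  finally show ?thesis unfolding L_def .
qed

lemma qf_between: assumes "0 \<le> x" "x \<le> 1" shows "0 \<le> qf t x \<and> qf t x \<le> (L t)\<^sup>2"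
proof -
  have q0: "0 \<le> qf t 0" "qf t 0 \<le> (L t)\<^sup>2" using qf_nonneg[of 0] qf_le[of 0] by auto
  have q1: "0 \<le> qf t 1" "qf t 1 \<le> (L t)\<^sup>2" using qf_nonneg[of 1] qf_le[of 1] by auto
  have "qf t x = (1 - x) * qf t 0 + x * qf t 1" by (rule qf_affine)
  moreover have "0 \<le> (1 - x) * qf t 0 + x * qf t 1" using assms q0 q1 by simp
  moreover have "(1 - x) * qf t 0 + x * qf t 1 \<le> (1 - x) * (L t)\<^sup>2 + x * (L t)\<^sup>2"
    using assms q0 q1 by (intro add_mono mult_left_mono) auto
  ultimately show ?thesis by (simp add: algebra_simps)
qed

lemma one_minus_exp: "x \<ge> 0 \<Longrightarrow> cmod (1 - complex_of_real (exp (- x / 2))) \<le> x / 2"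
proof -
  assume x: "x \<ge> 0"
  have "exp (- x / 2) \<le> 1" using x by simp
  moreover have "1 - x / 2 \<le> exp (- x / 2)" using exp_ge_add_one_self[of "- x / 2"] by simp
  moreover have "1 - complex_of_real (exp (- x / 2)) = complex_of_real (1 - exp (- x / 2))" by simp
  ultimately show ?thesis by (simp only: norm_of_real)
qed

end

theorem lemma1:
  fixes \<alpha> \<beta> :: real
    and A :: "nat \<Rightarrow> nat \<Rightarrow> nat \<Rightarrow> real"
    and \<mu> :: "nat \<Rightarrow> (real^3) measure"
  assumes "\<alpha> \<ge> 0" and "\<beta> \<ge> 0" and "\<alpha> + \<beta> \<le> 1"
    and A01: "\<And>p i j. i < p \<Longrightarrow> j < p \<Longrightarrow> A p i j \<in> {0, 1}"
    and Asym: "\<And>p i j. i < p \<Longrightarrow> j < p \<Longrightarrow> A p i j = A p j i"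
    and Adiag: "\<And>p i. i < p \<Longrightarrow> A p i i = 0"
    and N1: "filterlim (\<lambda>p. real p * (real p - 1) * dens p (A p)) at_top sequentially"
    and N2: "filterlim (\<lambda>p. real p * (real p - 1) * (1 - dens p (A p))) at_top sequentially"
    and gauss: "\<And>p. is_mvnormal0 (Sigma \<alpha> \<beta> (dens p (A p))) (\<mu> p)"
  shows "\<forall>f :: real^3 \<Rightarrow> real. bounded (range f) \<and> continuous_on UNIV f \<longrightarrow>
    (\<lambda>p. measure_pmf.expectation (err_pmf \<alpha> \<beta> p)
            (\<lambda>\<omega>. f (sqrt (real p * (real p - 1) / 2) *\<^sub>R
               vector [u1hat p (A p) \<omega> - u1 \<alpha> \<beta> (dens p (A p)),
                       u2hat p (A p) \<omega> - u2 \<alpha> \<beta> (dens p (A p)),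
                       u3hat p (A p) \<omega> - u3 \<alpha> \<beta> (dens p (A p))]))
          - (\<integral>x. f x \<partial>\<mu> p))
    \<longlonglongrightarrow> 0"
proof (intro allI impI)
  fix f :: "real^3 \<Rightarrow> real"
  assume fa: "bounded (range f) \<and> continuous_on UNIV f"
  interpret abc \<alpha> \<beta> by unfold_locales (use assms(1-3) in auto)
  have fc: "continuous_on UNIV f" using fa by simp
  obtain B where fB: "\<And>x. \<bar>f x\<bar> \<le> B" using fa unfolding bounded_iff by fastforce
  define \<delta> where "\<delta> p = dens p (A p)" for p
  define Sv :: "nat \<Rightarrow> (nat \<times> nat \<Rightarrow> int \<times> int \<times> int) \<Rightarrow> v3" where "Sv p \<omega> = sqrt (real p * (real p - 1) / 2) *\<^sub>R
               vector [u1hat p (A p) \<omega> - u1 \<alpha> \<beta> (dens p (A p)),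
                       u2hat p (A p) \<omega> - u2 \<alpha> \<beta> (dens p (A p)),
                       u3hat p (A p) \<omega> - u3 \<alpha> \<beta> (dens p (A p))]" for p \<omega>
  define M :: "nat \<Rightarrow> v3 measure" where "M p = distr (measure_pmf (err_pmf \<alpha> \<beta> p)) borel (Sv p)" for p
  have Mp: "prob_space (M p)" for p
    unfolding M_def by (rule measure_pmf.prob_space_distr) (simp add: measurable_pmf_measure1)
  have Ms: "sets (M p) = sets borel" for p by (simp add: M_def)
  have \<mu>p: "prob_space (\<mu> p)" and \<mu>s: "sets (\<mu> p) = sets borel" for p
    using gauss[of p] unfolding is_mvnormal0_def by auto
  have \<mu>c: "charf (\<mu> p) t = complex_of_real (exp (- qf t (\<delta> p) / 2))" for p t
    using gauss[of p] unfolding is_mvnormal0_def charf_def qf_def \<delta>_def by auto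
  have intM: "(\<integral>x. g x \<partial>M p) = measure_pmf.expectation (err_pmf \<alpha> \<beta> p) (\<lambda>\<omega>. g (Sv p \<omega>))"
    if "continuous_on UNIV g" for g :: "v3 \<Rightarrow> 'b::{banach,second_countable_topology}" and p
    unfolding M_def
    by (rule integral_distr) (simp_all add: measurable_pmf_measure1 borel_measurable_continuous_onI[OF that])
  define N where "N p = real (card (pairs p))" for p
  define Ak where "Ak p k = A p (fst k) (snd k)" for p k
  have Ak01: "Ak p k = 0 \<or> Ak p k = 1" if "k \<in> pairs p" for p k
    using A01[of "fst k" p "snd k"] that by (auto simp: Ak_def pairs_def)
  have Neq: "N p = real p * (real p - 1) / 2" for p by (simp add: N_def card_pairs)
  have Npos: "N p \<ge> 1" if "p \<ge> 2" for p
  proof -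
    have "2 \<le> real p" "1 \<le> real p - 1" using that by auto
    then have "2 * 1 \<le> real p * (real p - 1)" by (intro mult_mono) auto
    then show ?thesis unfolding Neq by simp
  qed
  have \<delta>eq: "\<delta> p = (\<Sum>k\<in>pairs p. Ak p k) / N p" for p
    unfolding \<delta>_def dens_def Neq Ak_def two_div by (simp add: split_def)
  have \<delta>01: "0 \<le> \<delta> p \<and> \<delta> p \<le> 1" for p
  proof -
    have s0: "0 \<le> (\<Sum>k\<in>pairs p. Ak p k)" using Ak01 by (intro sum_nonneg) force
    have s1: "(\<Sum>k\<in>pairs p. Ak p k) \<le> (\<Sum>k\<in>pairs p. 1)" using Ak01 by (intro sum_mono) force
    then have s1': "(\<Sum>k\<in>pairs p. Ak p k) \<le> N p" by (simp add: N_def)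
    show ?thesis
    proof (cases "N p = 0")
      case True then show ?thesis by (simp add: \<delta>eq)
    next
      case False
      then have "N p > 0" by (simp add: N_def)
      then show ?thesis using s0 s1' by (simp add: \<delta>eq divide_le_eq_1)
    qed
  qed
  have fin: "finite (pairs p)" for p by (rule finite_pairs)
  have u_aff: "u1 \<alpha> \<beta> x = u1 \<alpha> \<beta> 0 + x * (u1 \<alpha> \<beta> 1 - u1 \<alpha> \<beta> 0)"
    "u2 \<alpha> \<beta> x = u2 \<alpha> \<beta> 0 + x * (u2 \<alpha> \<beta> 1 - u2 \<alpha> \<beta> 0)"
    "u3 \<alpha> \<beta> x = u3 \<alpha> \<beta> 0 + x * (u3 \<alpha> \<beta> 1 - u3 \<alpha> \<beta> 0)" for x
    by (simp_all add: u1_def u2_def u3_def algebra_simps)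
  have Seq: "Sv p \<omega> = (1 / sqrt (N p)) *\<^sub>R (\<Sum>k\<in>pairs p. Zv \<alpha> \<beta> (Ak p k) (\<omega> k))" if p2: "p \<ge> 2" for p \<omega>
  proof -
    have N0: "N p > 0" using Npos[OF p2] by simp
    have cardpos: "card (pairs p) > 0" using N0 by (simp add: N_def)
    have sq: "sqrt (real p * (real p - 1) / 2) = sqrt (N p)" by (simp add: Neq)
    have uavg: "u1 \<alpha> \<beta> (\<delta> p) = (\<Sum>k\<in>pairs p. u1 \<alpha> \<beta> (Ak p k)) / N p"
               "u2 \<alpha> \<beta> (\<delta> p) = (\<Sum>k\<in>pairs p. u2 \<alpha> \<beta> (Ak p k)) / N p"
               "u3 \<alpha> \<beta> (\<delta> p) = (\<Sum>k\<in>pairs p. u3 \<alpha> \<beta> (Ak p k)) / N p"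
      using affine_sum[OF fin cardpos u_aff(1), of "Ak p"]
            affine_sum[OF fin cardpos u_aff(2), of "Ak p"]
            affine_sum[OF fin cardpos u_aff(3), of "Ak p"] N0
      by (simp_all add: \<delta>eq N_def field_simps)
    have mvc: "mv \<alpha> \<beta> a $ 1 = u1 \<alpha> \<beta> a" "mv \<alpha> \<beta> a $ 2 = u2 \<alpha> \<beta> a" "mv \<alpha> \<beta> a $ 3 = u3 \<alpha> \<beta> a" for a
      by (simp_all add: mv_def)
    have h1: "u1hat p (A p) \<omega> = (\<Sum>k\<in>pairs p. Xv (Ak p k) (\<omega> k) $ 1) / N p"
      unfolding u1hat_def Neq Ak_def two_div by (simp add: split_def Xv_def)
    have h2: "u2hat p (A p) \<omega> = (\<Sum>k\<in>pairs p. Xv (Ak p k) (\<omega> k) $ 2) / N p"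
      unfolding u2hat_def Neq Ak_def by (simp add: split_def Xv_def sum_divide_distrib[symmetric])
    have h3: "u3hat p (A p) \<omega> = (\<Sum>k\<in>pairs p. Xv (Ak p k) (\<omega> k) $ 3) / N p"
      unfolding u3hat_def Neq Ak_def by (simp add: split_def Xv_def sum_divide_distrib[symmetric])
    have comp: "Sv p \<omega> $ i = 1 / sqrt (N p) * (\<Sum>k\<in>pairs p. Zv \<alpha> \<beta> (Ak p k) (\<omega> k) $ i)" for i
    proof -
      have z: "(\<Sum>k\<in>pairs p. Zv \<alpha> \<beta> (Ak p k) (\<omega> k) $ i) =
          (\<Sum>k\<in>pairs p. Xv (Ak p k) (\<omega> k) $ i) - (\<Sum>k\<in>pairs p. mv \<alpha> \<beta> (Ak p k) $ i)"
        by (simp add: Zv_def sum_subtractf)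
      show ?thesis
        using three_cases[of i]
        by (auto simp: Sv_def sq z h1 h2 h3 uavg[unfolded \<delta>_def] mvc sqrt_aux[OF N0])
    qed
    show ?thesis by (simp add: vec_eq_iff comp sum_component)
  qed
  let ?E3 = "measure_pmf.expectation (eps3_pmf \<alpha> \<beta>)"
  define c where "c p = 1 / sqrt (N p)" for p
  have c0: "c p > 0" if "p \<ge> 2" for p using Npos[OF that] by (simp add: c_def)
  have c2: "(c p)\<^sup>2 = 1 / N p" if "p \<ge> 2" for p using Npos[OF that] by (simp add: c_def power_divide)
  have charM: "charf (M p) t = (\<Prod>k\<in>pairs p. ?E3 (\<lambda>e. cis (c p * (t \<bullet> Zv \<alpha> \<beta> (Ak p k) e))))"
    if p2: "p \<ge> 2" for p t
  proof -
    have "charf (M p) t = measure_pmf.expectation (err_pmf \<alpha> \<beta> p) (\<lambda>\<omega>. cis (t \<bullet> Sv p \<omega>))"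
      unfolding charf_def by (rule intM) (intro continuous_intros)
    also have "\<dots> = measure_pmf.expectation (err_pmf \<alpha> \<beta> p) (\<lambda>\<omega>. \<Prod>k\<in>pairs p. cis (c p * (t \<bullet> Zv \<alpha> \<beta> (Ak p k) (\<omega> k))))"
      by (simp add: Seq[OF p2] inner_sum_right sum_distrib_left cis_sum[OF fin] c_def)
    also have "\<dots> = (\<Prod>k\<in>pairs p. ?E3 (\<lambda>e. cis (c p * (t \<bullet> Zv \<alpha> \<beta> (Ak p k) e))))"
      unfolding err_pmf_def by (rule expect_prod_Pi[OF fin]) simp
    finally show ?thesis .
  qed
  have bprod: "(\<Prod>k\<in>pairs p. complex_of_real (exp (- ((c p)\<^sup>2 * qf t (Ak p k)) / 2))) = charf (\<mu> p) t"
    if p2: "p \<ge> 2" for p t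
  proof -
    have cardpos: "card (pairs p) > 0" using Npos[OF p2] by (simp add: N_def)
    have qs: "(\<Sum>k\<in>pairs p. qf t (Ak p k)) = N p * qf t (\<delta> p)"
    proof -
      have qa: "qf t x = qf t 0 + x * (qf t 1 - qf t 0)" for x using qf_affine[of t x] by (simp add: algebra_simps)
      show ?thesis using affine_sum[OF fin cardpos qa, of "Ak p"] by (simp add: \<delta>eq N_def)
    qed
    have "(\<Prod>k\<in>pairs p. complex_of_real (exp (- ((c p)\<^sup>2 * qf t (Ak p k)) / 2)))
        = complex_of_real (exp (\<Sum>k\<in>pairs p. - ((c p)\<^sup>2 * qf t (Ak p k)) / 2))"
      by (simp add: exp_sum[OF fin])
    also have "(\<Sum>k\<in>pairs p. - ((c p)\<^sup>2 * qf t (Ak p k)) / 2) = - ((c p)\<^sup>2 * (\<Sum>k\<in>pairs p. qf t (Ak p k))) / 2"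
      by (simp add: sum_distrib_left sum_divide_distrib sum_negf)
    also have "\<dots> = - qf t (\<delta> p) / 2" using Npos[OF p2] by (simp add: qs c2[OF p2])
    finally show ?thesis by (simp add: \<mu>c)
  qed
  define err where "err t p = (L t)^3 / 6 * c p + (L t)^4 / 8 * (1 / N p)" for t p
  have diffb: "cmod (charf (M p) t - charf (\<mu> p) t) \<le> err t p" if p2: "p \<ge> 2" for p t
  proof -
    define a where "a k = ?E3 (\<lambda>e. cis (c p * (t \<bullet> Zv \<alpha> \<beta> (Ak p k) e)))" for k
    define b where "b k = complex_of_real (exp (- ((c p)\<^sup>2 * qf t (Ak p k)) / 2))" for k
    have ab: "cmod (a k - b k) \<le> (c p)^3 * (L t)^3 / 6 + (c p)^4 * (L t)^4 / 8" if k: "k \<in> pairs p" for k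
    proof -
      have a01: "Ak p k = 0 \<or> Ak p k = 1" by (rule Ak01[OF k])
      define y where "y = (c p)\<^sup>2 * qf t (Ak p k) / 2"
      have y0: "y \<ge> 0" using qf_nonneg[OF a01, of t] by (simp add: y_def)
      have q2: "(qf t (Ak p k))\<^sup>2 \<le> ((L t)\<^sup>2)\<^sup>2"
        using qf_nonneg[OF a01, of t] qf_le[OF a01, of t] by (intro power_mono) auto
      have 1: "cmod (a k - complex_of_real (1 - (c p)\<^sup>2 * qf t (Ak p k) / 2)) \<le> (c p)^3 * (L t)^3 / 6"
        using char_factor[OF a01, of "c p" t] c0[OF p2] by (simp add: a_def)
      have "cmod (complex_of_real (1 - y) - b k) = \<bar>exp (- y) - (1 - y)\<bar>"
        unfolding b_def y_def by (simp flip: of_real_diff add: abs_minus_commute)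
      also have "\<dots> \<le> y\<^sup>2 / 2" by (rule exp_approx[OF y0])
      also have "y\<^sup>2 / 2 = (c p)^4 * (qf t (Ak p k))\<^sup>2 / 8" by (simp add: y_def power_mult_distrib power_divide)
      also have "\<dots> \<le> (c p)^4 * ((L t)\<^sup>2)\<^sup>2 / 8" using q2 by (intro divide_right_mono mult_left_mono) auto
      also have "\<dots> = (c p)^4 * (L t)^4 / 8" by simp
      finally have 2: "cmod (complex_of_real (1 - y) - b k) \<le> (c p)^4 * (L t)^4 / 8" .
      have "cmod (a k - b k) \<le> cmod (a k - complex_of_real (1 - y)) + cmod (complex_of_real (1 - y) - b k)"
      proof -
        have "a k - b k = (a k - complex_of_real (1 - y)) + (complex_of_real (1 - y) - b k)" by simp
        then show ?thesis by (metis norm_triangle_ineq)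
      qed
      then show ?thesis using 1 2 by (simp add: y_def)
    qed
    have na: "cmod (a k) \<le> 1" for k unfolding a_def by (rule char_factor_norm)
    have nb: "cmod (b k) \<le> 1" if "k \<in> pairs p" for k
      using qf_nonneg[OF Ak01[OF that], of t] by (simp add: b_def)
    have "cmod (charf (M p) t - charf (\<mu> p) t) = cmod ((\<Prod>k\<in>pairs p. a k) - (\<Prod>k\<in>pairs p. b k))"
      by (simp add: charM[OF p2] bprod[OF p2, symmetric] a_def b_def)
    also have "\<dots> \<le> real (card (pairs p)) * ((c p)^3 * (L t)^3 / 6 + (c p)^4 * (L t)^4 / 8)"
      by (rule prod_close) (use na nb ab in auto)
    also have "\<dots> = err t p"
    proof -
      have N0: "N p > 0" using Npos[OF p2] by simp
      have "N p * (c p)^3 = c p" using c2[OF p2] N0 by (simp add: power3_eq_cube power2_eq_square)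
      moreover have "N p * (c p)^4 = 1 / N p"
      proof -
        have "(c p)^4 = ((c p)\<^sup>2)\<^sup>2" by simp
        also have "\<dots> = (1 / N p)\<^sup>2" by (simp add: c2[OF p2])
        finally show ?thesis using N0 by (simp add: power2_eq_square field_simps)
      qed
      moreover have "N p * ((c p)^3 * (L t)^3 / 6 + (c p)^4 * (L t)^4 / 8) = (N p * (c p)^3) * (L t)^3 / 6 + (N p * (c p)^4) * (L t)^4 / 8"
        by (simp add: algebra_simps)
      ultimately show ?thesis unfolding err_def N_def[symmetric] by (simp add: mult_ac)
    qed
    finally show ?thesis .
  qed
  have Nlim: "filterlim N at_top sequentially"
  proof (rule filterlim_at_top_mono[OF filterlim_real_sequentially])
    show "eventually (\<lambda>p. real p \<le> N p) sequentially"
      using eventually_ge_at_top[of "3::nat"]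
    proof eventually_elim
      case (elim p)
      then have "2 \<le> real p - 1" by simp
      then have "real p * 2 \<le> real p * (real p - 1)" by (intro mult_left_mono) auto
      then show ?case by (simp add: Neq)
    qed
  qed
  have err0: "(\<lambda>p. err t p) \<longlonglongrightarrow> 0" for t
  proof -
    have i1: "(\<lambda>p. inverse (sqrt (N p))) \<longlonglongrightarrow> 0"
      by (rule tendsto_inverse_0_at_top[OF filterlim_compose[OF sqrt_at_top Nlim]])
    have i2: "(\<lambda>p. inverse (N p)) \<longlonglongrightarrow> 0" by (rule tendsto_inverse_0_at_top[OF Nlim])
    have "(\<lambda>p. (L t)^3 / 6 * inverse (sqrt (N p)) + (L t)^4 / 8 * inverse (N p)) \<longlonglongrightarrow> 0"
      by (rule tendsto_add_zero[OF tendsto_mult_right_zero[OF i1] tendsto_mult_right_zero[OF i2]])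
    then show ?thesis unfolding err_def c_def by (simp only: inverse_eq_divide)
  qed
  have ch: "(\<lambda>p. charf (M p) t - charf (\<mu> p) t) \<longlonglongrightarrow> 0" for t
  proof -
    have "eventually (\<lambda>p. norm (charf (M p) t - charf (\<mu> p) t) \<le> err t p) sequentially"
      using eventually_ge_at_top[of "2::nat"] by (rule eventually_mono) (rule diffb)
    then show ?thesis by (rule Lim_null_comparison[OF _ err0])
  qed
  have tightmu: "measure (\<mu> p) (outs R) \<le> 12 * 1 / R\<^sup>2" if R: "R > 0" for p R
  proof (rule tight_char[OF \<mu>p \<mu>s _ R])
    fix i :: 3 and s :: real assume s: "0 < s" "s \<le> 1"
    define q where "q = qf (s *\<^sub>R axis i 1) (\<delta> p)"
    have q: "0 \<le> q" "q \<le> s\<^sup>2" using qf_between[of "\<delta> p" "s *\<^sub>R axis i 1"] \<delta>01[of p] s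
      by (auto simp: q_def L_axis)
    have "Re (1 - charf (\<mu> p) (s *\<^sub>R axis i 1)) \<le> cmod (1 - charf (\<mu> p) (s *\<^sub>R axis i 1))"
      by (rule complex_Re_le_cmod)
    also have "\<dots> \<le> q / 2" unfolding \<mu>c q_def[symmetric] by (rule one_minus_exp[OF q(1)])
    also have "\<dots> \<le> 1 * s\<^sup>2" using q by simp
    finally show "Re (1 - charf (\<mu> p) (s *\<^sub>R axis i 1)) \<le> 1 * s\<^sup>2" .
  qed
  have tightM: "measure (M p) (outs R) \<le> 12 * 1 / R\<^sup>2" if R: "R > 0" and p2: "p \<ge> 2" for p R
  proof (rule tight_char[OF Mp Ms _ R])
    fix i :: 3 and s :: real assume s: "0 < s" "s \<le> 1"
    define t where "t = s *\<^sub>R axis i (1::real)"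
    define q where "q = qf t (\<delta> p)"
    have Lt: "L t = s" using s by (simp add: t_def L_axis)
    have q: "0 \<le> q" "q \<le> s\<^sup>2" using qf_between[of "\<delta> p" t] \<delta>01[of p] s
      by (auto simp: q_def Lt)
    have cp: "c p \<le> 1" using Npos[OF p2] by (simp add: c_def)
    have Np: "1 / N p \<le> 1" using Npos[OF p2] by simp
    have s3: "s^3 \<le> s\<^sup>2" using s by (simp add: power_decreasing)
    have s4: "s^4 \<le> s\<^sup>2" using s by (simp add: power_decreasing)
    have e: "err t p \<le> s\<^sup>2 / 6 + s\<^sup>2 / 8"
    proof -
      have "err t p = s^3 / 6 * c p + s^4 / 8 * (1 / N p)" by (simp add: err_def Lt)
      also have "\<dots> \<le> s^3 / 6 * 1 + s^4 / 8 * 1"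
        using cp Np s c0[OF p2] Npos[OF p2] by (intro add_mono mult_left_mono) auto
      also have "\<dots> \<le> s\<^sup>2 / 6 + s\<^sup>2 / 8" using s3 s4 by simp
      finally show ?thesis .
    qed
    have "Re (1 - charf (M p) t) \<le> cmod (1 - charf (M p) t)" by (rule complex_Re_le_cmod)
    also have "\<dots> \<le> cmod (1 - charf (\<mu> p) t) + cmod (charf (M p) t - charf (\<mu> p) t)"
    proof -
      have "1 - charf (M p) t = (1 - charf (\<mu> p) t) - (charf (M p) t - charf (\<mu> p) t)" by simp
      then show ?thesis by (metis norm_triangle_ineq4)
    qed
    also have "\<dots> \<le> q / 2 + err t p"
      using one_minus_exp[OF q(1)] diffb[OF p2, of t] unfolding \<mu>c q_def by (intro add_mono) auto
    also have "\<dots> \<le> 1 * s\<^sup>2" using q e by simp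
    finally show "Re (1 - charf (M p) (s *\<^sub>R axis i 1)) \<le> 1 * s\<^sup>2" by (simp add: t_def)
  qed
  have tight: "\<exists>R>0. eventually (\<lambda>n. measure (M n) (outs R) \<le> \<eta> \<and> measure (\<mu> n) (outs R) \<le> \<eta>) sequentially"
    if \<eta>: "\<eta> > 0" for \<eta>
  proof (intro exI conjI)
    define R where "R = sqrt (12 / \<eta>)"
    show R0: "R > 0" using \<eta> by (simp add: R_def)
    have "R\<^sup>2 = 12 / \<eta>" using \<eta> by (simp add: R_def)
    then have RR: "12 * 1 / R\<^sup>2 = \<eta>" using \<eta> by simp
    show "eventually (\<lambda>n. measure (M n) (outs R) \<le> \<eta> \<and> measure (\<mu> n) (outs R) \<le> \<eta>) sequentially"
      using eventually_ge_at_top[of "2::nat"]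
      by (rule eventually_mono) (use tightM[OF R0] tightmu[OF R0] RR in auto)
  qed
  have main: "(\<lambda>n. (\<integral>x. f x \<partial>M n) - (\<integral>x. f x \<partial>\<mu> n)) \<longlonglongrightarrow> 0"
    by (rule weak_from_char[OF Mp Ms \<mu>p \<mu>s ch tight fc fB])
  then show "(\<lambda>p. measure_pmf.expectation (err_pmf \<alpha> \<beta> p)
            (\<lambda>\<omega>. f (sqrt (real p * (real p - 1) / 2) *\<^sub>R
               vector [u1hat p (A p) \<omega> - u1 \<alpha> \<beta> (dens p (A p)),
                       u2hat p (A p) \<omega> - u2 \<alpha> \<beta> (dens p (A p)),
                       u3hat p (A p) \<omega> - u3 \<alpha> \<beta> (dens p (A p))]))
          - (\<integral>x. f x \<partial>\<mu> p)) \<longlonglongrightarrow> 0"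
    by (simp add: intM[OF fc] Sv_def)
qed

end
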